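(* For every $q\in\mathbb C$ (including $q=0$) the products $\cdot_{(k),q}$ on $V_L$ defined in the context satisfy the Borcherds identities, so that $(V_L,\cdot_{(k),q},e^0)$ is a vertex superalgebra $V_{L,q}$. For $q\neq 0$ the map $t_q:V_{L,q}\to V_L$, $t_q(x\otimes e^{\beta+\alpha})=q^{\mathrm{ht}(\alpha)}x\otimes e^{\beta+\alpha}$ ($\beta\in L_B$, $\alpha\in L_A$), is an isomorphism of vertex superalgebras. For $q=0$, one has $(x\otimes e^{\beta+\alpha})_{(k),0}(y\otimes e^{\beta'+\alpha'})=(x\otimes e^{\beta+\alpha})_{(k)}(y\otimes e^{\beta'+\alpha'})$ if $\alpha,\alpha'$ lie in a common cone $\Delta_j$ ($1\le j\le N+1$), and $=0$ otherwise.
   Context: Fix $N\ge 1$. Let $L$ be the free abelian group with basis $A^1,\dots,A^N,B^1,\dots,B^N$ and symmetric bilinear form $(A^i,B^j)=\delta_{ij}$, $(A^i,A^j)=(B^i,B^j)=0$; let $L_A$ (resp. $L_B$) be the span of the $A^i$ (resp. $B^i$). Let $V_L$ be the vertex superalgebra $\Lambda\otimes S\otimes\mathbb C[L]$: it is the direct sum over $\alpha\in L$ of Fock modules $V_L(\alpha)$ generated from vectors $e^\alpha$ over the Heisenberg algebra with modes $x_j$ ($x\in L\otimes\mathbb C$, $j\in\mathbb Z$, $[x_i,y_j]=i(x,y)\delta_{i+j,0}$) and the Clifford algebra with odd modes $\Psi^i_j,\Phi^i_j$ ($[\Psi^i_j,\Phi^k_l]_+=\delta_{ik}\delta_{j+l,0}$,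 other anticommutators zero), with $x_ne^\alpha=0$ ($n>0$), $x_0e^\alpha=(x,\alpha)e^\alpha$, $\Psi^i_ne^\alpha=0$ ($n\ge0$), $\Phi^i_ne^\alpha=0$ ($n\ge1$). Its vertex structure is the standard lattice one: vacuum $e^0$, fields $x(z)=\sum_j x_jz^{-j-1}$, $\Phi^i(z)=\sum_j\Phi^i_jz^{-j}$, $\Psi^i(z)=\sum_j\Psi^i_jz^{-j-1}$, $e^\alpha(z)=e^\alpha\exp(-\sum_{n<0}\frac{\alpha_n}{n}z^{-n})\exp(-\sum_{n>0}\frac{\alpha_n}{n}z^{-n})z^{\alpha_0}$, normally ordered products for general states; $a_{(k)}b$ denotes the coefficient of $z^{-k-1}$ in $a(z)b$. Every vector of $V_L(\beta+\alpha)$, $\beta\in L_B,\alpha\in L_A$, is said to have $A$-part $\alpha$. Let $\xi_i=A^i$ ($1\le i\le N$), $\xi_{N+1}=-A^1-\dots-A^N$, and $\Delta_j$ the set of nonnegative integer combinations of $\{\xi_i\}_{i\ne j}$. Each $\alpha\in L_A$ is uniquely $\alpha=\sum_{i=1}^{N+1}n_i\xi_i$ with $n_i\ge0$ and at least one $n_i=0$; set $\mathrm{ht}(\alpha)=\sum_in_i$. Then $\mathrm{ht}(\alpha)+\mathrm{ht}(\alpha')\ge\mathrm{ht}(\alpha+\alpha')$. For $q\in\mathbb C$ define, for $a$ with $A$-part $\alpha$ and $b$ with $A$-part $\alpha'$, $a_{(k),q}b=q^{\mathrm{ht}(\alpha)+\mathrm{ht}(\alpha')-\mathrm{ht}(\alpha+\alpha')}\,a_{(k)}b$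 (with $0^0=1$), extended bilinearly. *)

theory Defs
  imports Complex_Main "HOL-Library.Multiset" "HOL-Library.Function_Algebras"
          "HOL-Library.Product_Lexorder"
begin

text \<open>A lattice element gamma = sum a_i A^i + sum b_i B^i is the pair (a,b) of coefficient
  functions; only indices 1..N are used. fst gamma is its A-part.\<close>
type_synonym latt = "(nat \<Rightarrow> int) \<times> (nat \<Rightarrow> int)"

definition lat :: "nat \<Rightarrow> latt set" where
  "lat N = {\<gamma>. \<forall>i. (i = 0 \<or> i > N) \<longrightarrow> fst \<gamma> i = 0 \<and> snd \<gamma> i = 0}"

definition lzero :: latt where "lzero = (\<lambda>_. 0, \<lambda>_. 0)"

definition ladd :: "latt \<Rightarrow> latt \<Rightarrow> latt" where
  "ladd \<gamma> \<delta> = (\<lambda>i. fst \<gamma> i + fst \<delta> i, \<lambda>i. snd \<gamma> i + snd \<delta> i)"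

definition pair :: "nat \<Rightarrow> latt \<Rightarrow> latt \<Rightarrow> int" where
  "pair N \<gamma> \<delta> = (\<Sum>i\<in>{1..N}. fst \<gamma> i * snd \<delta> i + snd \<gamma> i * fst \<delta> i)"

text \<open>Bosonic creation labels: (False,i,n) = A^i_{-n}, (True,i,n) = B^i_{-n}, n >= 1.
  Fermionic creation labels: (False,i,n) = Psi^i_{-n} (n >= 1), (True,i,n) = Phi^i_{-n} (n >= 0).
  A basis vector is (multiset of bosonic labels, set of fermionic labels, lattice point):
  the monomial (product of bosonic modes)(ordered product of fermionic modes, in increasing
  lexicographic label order) applied to e^gamma.\<close>
type_synonym lab = "bool \<times> nat \<times> nat"
type_synonym basis = "lab multiset \<times> lab set \<times> latt"
type_synonym vec = "basis \<Rightarrow> complex"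

definition valid :: "nat \<Rightarrow> basis \<Rightarrow> bool" where
  "valid N b \<longleftrightarrow>
     (\<forall>(fl,i,n)\<in>set_mset (fst b). 1 \<le> i \<and> i \<le> N \<and> 1 \<le> n) \<and>
     finite (fst (snd b)) \<and>
     (\<forall>(fl,i,n)\<in>fst (snd b). 1 \<le> i \<and> i \<le> N \<and> (fl \<or> 1 \<le> n)) \<and>
     snd (snd b) \<in> lat N"

definition VL :: "nat \<Rightarrow> vec set" where
  "VL N = {v. finite {b. v b \<noteq> 0} \<and> (\<forall>b. v b \<noteq> 0 \<longrightarrow> valid N b)}"

definition bas :: "basis \<Rightarrow> vec" where "bas b = (\<lambda>x. if x = b then 1 else 0)"

definition sc :: "complex \<Rightarrow> vec \<Rightarrow> vec" where "sc c v = (\<lambda>x. c * v x)"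

definition evec :: "latt \<Rightarrow> vec" where "evec \<gamma> = bas ({#}, {}, \<gamma>)"

definition vac :: vec where "vac = evec lzero"

definition lin :: "(basis \<Rightarrow> vec) \<Rightarrow> vec \<Rightarrow> vec" where
  "lin f v = (\<Sum>b\<in>{b. v b \<noteq> 0}. sc (v b) (f b))"

definition Apart_b :: "basis \<Rightarrow> (nat \<Rightarrow> int)" where "Apart_b b = fst (snd (snd b))"

definition has_Apart :: "nat \<Rightarrow> (nat \<Rightarrow> int) \<Rightarrow> vec \<Rightarrow> bool" where
  "has_Apart N \<alpha> v \<longleftrightarrow> v \<in> VL N \<and> (\<forall>b. v b \<noteq> 0 \<longrightarrow> Apart_b b = \<alpha>)"

definition hom :: "vec \<Rightarrow> bool \<Rightarrow> bool" where
  "hom v p \<longleftrightarrow> (\<forall>b. v b \<noteq> 0 \<longrightarrow> odd (card (fst (snd b))) = p)"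

text \<open>heis (fl,i) m is the mode h_m for h = A^i (fl = False) or h = B^i (fl = True),
  acting on a basis vector.\<close>
definition heis :: "bool \<times> nat \<Rightarrow> int \<Rightarrow> basis \<Rightarrow> vec" where
  "heis h m b = (case h of (fl, i) \<Rightarrow> case b of (M, F, \<gamma>) \<Rightarrow>
     if m < 0 then bas (add_mset (fl, i, nat (-m)) M, F, \<gamma>)
     else if m = 0 then sc (of_int (if fl then fst \<gamma> i else snd \<gamma> i)) (bas b)
     else sc (of_int m * of_nat (count M (\<not> fl, i, nat m))) (bas (M - {#(\<not> fl, i, nat m)#}, F, \<gamma>)))"

definition heis_gen :: "nat \<Rightarrow> latt \<Rightarrow> int \<Rightarrow> vec \<Rightarrow> vec" where
  "heis_gen N \<gamma> m v = (\<Sum>i\<in>{1..N}. sc (of_int (fst \<gamma> i)) (lin (heis (False, i) m) v)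
                                  + sc (of_int (snd \<gamma> i)) (lin (heis (True, i) m) v))"

definition fsign :: "lab set \<Rightarrow> lab \<Rightarrow> complex" where
  "fsign F l = (-1) ^ card {l'\<in>F. l' < l}"

definition fcreate :: "lab \<Rightarrow> basis \<Rightarrow> vec" where
  "fcreate l b = (case b of (M, F, \<gamma>) \<Rightarrow>
     if l \<in> F then 0 else sc (fsign F l) (bas (M, insert l F, \<gamma>)))"

definition fannih :: "lab \<Rightarrow> basis \<Rightarrow> vec" where
  "fannih l b = (case b of (M, F, \<gamma>) \<Rightarrow>
     if l \<in> F then sc (fsign F l) (bas (M, F - {l}, \<gamma>)) else 0)"

text \<open>Psi^i_m and Phi^i_m ([Psi^i_j, Phi^k_l]_+ = delta_ik delta_{j+l,0}).\<close>
definition psi :: "nat \<Rightarrow> int \<Rightarrow> basis \<Rightarrow> vec" where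
  "psi i m = (if m < 0 then fcreate (False, i, nat (-m)) else fannih (True, i, nat m))"

definition phi :: "nat \<Rightarrow> int \<Rightarrow> basis \<Rightarrow> vec" where
  "phi i m = (if m \<le> 0 then fcreate (True, i, nat (-m)) else fannih (False, i, nat m))"

text \<open>Coefficients s_k of z^k in exp(sum_{m>0} gamma_{-m} z^m / m) e^{gamma+delta}:
  s_0 = e^{gamma+delta}, k s_k = sum_{m=1}^k gamma_{-m} s_{k-m}. cohl returns [s_0,...,s_k].\<close>
fun cohl :: "nat \<Rightarrow> latt \<Rightarrow> latt \<Rightarrow> nat \<Rightarrow> vec list" where
  "cohl N \<gamma> \<delta> 0 = [evec (ladd \<gamma> \<delta>)]"
| "cohl N \<gamma> \<delta> (Suc k) = (let L = cohl N \<gamma> \<delta> k in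
     L @ [sc (1 / of_nat (Suc k))
            (\<Sum>m\<in>{1..Suc k}. heis_gen N \<gamma> (- int m) (L ! (Suc k - m)))])"

definition coh :: "nat \<Rightarrow> latt \<Rightarrow> latt \<Rightarrow> nat \<Rightarrow> vec" where
  "coh N \<gamma> \<delta> k = cohl N \<gamma> \<delta> k ! k"

definition fsum :: "(nat \<Rightarrow> vec) \<Rightarrow> vec" where
  "fsum f = (\<Sum>j\<in>{j. f j \<noteq> 0}. f j)"

definition vsa :: "vec set \<Rightarrow> (int \<Rightarrow> vec \<Rightarrow> vec \<Rightarrow> vec) \<Rightarrow> vec \<Rightarrow> bool" where
  "vsa S Y one \<longleftrightarrow>
     one \<in> S \<and> hom one False \<and>
     (\<forall>k. \<forall>a\<in>S. \<forall>b\<in>S. Y k a b \<in> S) \<and>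
     (\<forall>k. \<forall>a\<in>S. \<forall>a'\<in>S. \<forall>b\<in>S. \<forall>c.
        Y k (a + a') b = Y k a b + Y k a' b \<and> Y k (sc c a) b = sc c (Y k a b) \<and>
        Y k b (a + a') = Y k b a + Y k b a' \<and> Y k b (sc c a) = sc c (Y k b a)) \<and>
     (\<forall>a\<in>S. \<forall>b\<in>S. \<exists>M. \<forall>k\<ge>M. Y k a b = 0) \<and>
     (\<forall>a\<in>S. Y (-1) one a = a \<and> (\<forall>k. k \<noteq> -1 \<longrightarrow> Y k one a = 0)) \<and>
     (\<forall>a\<in>S. Y (-1) a one = a \<and> (\<forall>k\<ge>0. Y k a one = 0)) \<and>
     (\<forall>k. \<forall>a\<in>S. \<forall>b\<in>S. \<forall>p p'. hom a p \<longrightarrow> hom b p' \<longrightarrow> hom (Y k a b) (p \<noteq> p')) \<and>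
     (\<forall>a\<in>S. \<forall>b\<in>S. \<forall>c\<in>S. \<forall>p p'. hom a p \<longrightarrow> hom b p' \<longrightarrow> (\<forall>m n k :: int.
        fsum (\<lambda>j. sc (of_int m gchoose j) (Y (m + k - int j) (Y (n + int j) a b) c)) =
        fsum (\<lambda>j. sc ((-1) ^ j * (of_int n gchoose j))
                  (Y (m + n - int j) a (Y (k + int j) b c)
                   - sc ((if even n then 1 else -1) * (if p \<and> p' then -1 else 1))
                        (Y (n + k - int j) b (Y (m + int j) a c))))))"

definition vsa_iso :: "vec set \<Rightarrow> (int \<Rightarrow> vec \<Rightarrow> vec \<Rightarrow> vec) \<Rightarrow> vec
                       \<Rightarrow> (int \<Rightarrow> vec \<Rightarrow> vec \<Rightarrow> vec) \<Rightarrow> vec \<Rightarrow> (vec \<Rightarrow> vec) \<Rightarrow> bool" where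
  "vsa_iso S Y1 one1 Y2 one2 t \<longleftrightarrow>
     bij_betw t S S \<and>
     (\<forall>a\<in>S. \<forall>b\<in>S. \<forall>c. t (a + b) = t a + t b \<and> t (sc c a) = sc c (t a)) \<and>
     (\<forall>a\<in>S. \<forall>p. hom a p \<longrightarrow> hom (t a) p) \<and>
     t one1 = one2 \<and>
     (\<forall>k. \<forall>a\<in>S. \<forall>b\<in>S. t (Y1 k a b) = Y2 k (t a) (t b))"

text \<open>Y is the standard lattice vertex superalgebra structure: a vertex superalgebra with vacuum
  e^0 in which the fields of the generators A^i_{-1}e^0, B^i_{-1}e^0, Psi^i_{-1}e^0, Phi^i_0 e^0
  are x(z), Psi^i(z), Phi^i(z) (so x_(m) = x_m, Psi^i_(m) = Psi^i_m, Phi^i_(m) = Phi^i_{m+1}),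
  and Y(e^gamma,z) e^delta = eps z^{(gamma,delta)} exp(sum_{m>0} gamma_{-m} z^m/m) e^{gamma+delta}
  with a sign eps = +-1 (the usual cocycle). These data determine Y uniquely (for a given cocycle).\<close>
definition lattice_vsa :: "nat \<Rightarrow> (int \<Rightarrow> vec \<Rightarrow> vec \<Rightarrow> vec) \<Rightarrow> bool" where
  "lattice_vsa N Y \<longleftrightarrow>
     vsa (VL N) Y vac \<and>
     (\<forall>fl i m. \<forall>v\<in>VL N. 1 \<le> i \<and> i \<le> N \<longrightarrow>
        Y m (bas ({#(fl, i, 1)#}, {}, lzero)) v = lin (heis (fl, i) m) v) \<and>
     (\<forall>i m. \<forall>v\<in>VL N. 1 \<le> i \<and> i \<le> N \<longrightarrow>
        Y m (bas ({#}, {(False, i, 1)}, lzero)) v = lin (psi i m) v) \<and>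
     (\<forall>i m. \<forall>v\<in>VL N. 1 \<le> i \<and> i \<le> N \<longrightarrow>
        Y m (bas ({#}, {(True, i, 0)}, lzero)) v = lin (phi i (m + 1)) v) \<and>
     (\<forall>\<gamma>\<in>lat N. \<forall>\<delta>\<in>lat N. \<exists>\<epsilon>\<in>{1, -1::complex}. \<forall>n.
        Y n (evec \<gamma>) (evec \<delta>) =
          (if - n - 1 - pair N \<gamma> \<delta> < 0 then 0
           else sc \<epsilon> (coh N \<gamma> \<delta> (nat (- n - 1 - pair N \<gamma> \<delta>)))))"

text \<open>xi_i = A^i (1<=i<=N), xi_{N+1} = -(A^1+...+A^N). An element alpha of L_A (coefficient
  function c, alpha = sum c_i A^i) is sum n_i xi_i with n_i >= 0 and some n_i = 0.\<close>
definition hdec :: "nat \<Rightarrow> (nat \<Rightarrow> int) \<Rightarrow> (nat \<Rightarrow> nat) \<Rightarrow> bool" where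
  "hdec N c n \<longleftrightarrow> (\<forall>i. i \<notin> {1..Suc N} \<longrightarrow> n i = 0) \<and> (\<exists>i\<in>{1..Suc N}. n i = 0) \<and>
                  (\<forall>i\<in>{1..N}. c i = int (n i) - int (n (Suc N)))"

definition ht :: "nat \<Rightarrow> (nat \<Rightarrow> int) \<Rightarrow> nat" where
  "ht N c = (\<Sum>i\<in>{1..Suc N}. (THE n. hdec N c n) i)"

definition inDelta :: "nat \<Rightarrow> nat \<Rightarrow> (nat \<Rightarrow> int) \<Rightarrow> bool" where
  "inDelta N j c \<longleftrightarrow> (\<exists>n :: nat \<Rightarrow> nat. n j = 0 \<and>
                        (\<forall>i\<in>{1..N}. c i = int (n i) - int (n (Suc N))))"

definition qexp :: "nat \<Rightarrow> basis \<Rightarrow> basis \<Rightarrow> nat" where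
  "qexp N b1 b2 = ht N (Apart_b b1) + ht N (Apart_b b2) - ht N (Apart_b b1 + Apart_b b2)"

text \<open>a_(k),q b, extended bilinearly (0^0 = 1).\<close>
definition qprod :: "nat \<Rightarrow> complex \<Rightarrow> (int \<Rightarrow> vec \<Rightarrow> vec \<Rightarrow> vec) \<Rightarrow> int \<Rightarrow> vec \<Rightarrow> vec \<Rightarrow> vec" where
  "qprod N q Y k a b = (\<Sum>b1\<in>{x. a x \<noteq> 0}. \<Sum>b2\<in>{x. b x \<noteq> 0}.
        sc (a b1 * b b2 * q ^ qexp N b1 b2) (Y k (bas b1) (bas b2)))"

definition tq :: "nat \<Rightarrow> complex \<Rightarrow> vec \<Rightarrow> vec" where
  "tq N q = lin (\<lambda>b. sc (q ^ ht N (Apart_b b)) (bas b))"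

end

theory Submission
  imports Defs
begin


definition mx :: "nat \<Rightarrow> (nat \<Rightarrow> int) \<Rightarrow> int" where
  "mx N c = Max (insert 0 ((\<lambda>i. - c i) ` {1..N}))"

lemma mx_ge0: "0 \<le> mx N c" unfolding mx_def by (rule Max_ge) auto
lemma mx_ge: "i \<in> {1..N} \<Longrightarrow> - c i \<le> mx N c" unfolding mx_def by (rule Max_ge) auto
lemma mx_ge2: "1 \<le> i \<Longrightarrow> i \<le> N \<Longrightarrow> 0 \<le> c i + mx N c" using mx_ge[of i N c] by auto
lemma mx_in: "mx N c = 0 \<or> (\<exists>i\<in>{1..N}. mx N c = - c i)"
proof -
  have "mx N c \<in> insert 0 ((\<lambda>i. - c i) ` {1..N})" unfolding mx_def by (rule Max_in) auto
  thus ?thesis by auto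
qed
lemma mx_le: "0 \<le> t \<Longrightarrow> (\<forall>i\<in>{1..N}. - c i \<le> t) \<Longrightarrow> mx N c \<le> t"
  unfolding mx_def by (subst Max_le_iff) auto

definition nd :: "nat \<Rightarrow> (nat \<Rightarrow> int) \<Rightarrow> nat \<Rightarrow> nat" where
  "nd N c i = (if i = Suc N then nat (mx N c) else if i \<in> {1..N} then nat (c i + mx N c) else 0)"

lemma hdec_nd: "hdec N c (nd N c)"
proof -
  have "\<exists>i\<in>{1..Suc N}. nd N c i = 0"
    using mx_in[of N c]
  proof
    assume "mx N c = 0" thus ?thesis by (intro bexI[of _ "Suc N"]) (auto simp: nd_def)
  next
    assume "\<exists>i\<in>{1..N}. mx N c = - c i"
    then obtain i where "i \<in> {1..N}" "mx N c = - c i" by blast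
    thus ?thesis by (intro bexI[of _ i]) (auto simp: nd_def)
  qed
  moreover have "\<forall>i\<in>{1..N}. c i = int (nd N c i) - int (nd N c (Suc N))"
    using mx_ge2[of _ N c] mx_ge0[of N c] by (auto simp: nd_def)
  ultimately show ?thesis unfolding hdec_def by (auto simp: nd_def)
qed

lemma hdec_unique: assumes "hdec N c n" shows "n = nd N c"
proof -
  let ?t = "int (n (Suc N))"
  have out: "\<forall>i. i \<notin> {1..Suc N} \<longrightarrow> n i = 0" and z: "\<exists>i\<in>{1..Suc N}. n i = 0"
    and eq: "\<forall>i\<in>{1..N}. c i = int (n i) - ?t" using assms unfolding hdec_def by auto
  have ge: "mx N c \<le> ?t" using eq by (intro mx_le) force+
  have le: "?t \<le> mx N c"
  proof -
    obtain i where i: "i \<in> {1..Suc N}" "n i = 0" using z by blast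
    show ?thesis
    proof (cases "i = Suc N")
      case True thus ?thesis using i mx_ge0[of N c] by simp
    next
      case False hence "i \<in> {1..N}" using i by auto
      thus ?thesis using eq i mx_ge[of i N c] by force
    qed
  qed
  have t: "?t = mx N c" using ge le by simp
  show ?thesis
  proof
    fix i show "n i = nd N c i"
    proof (cases "i = Suc N")
      case True thus ?thesis using t by (auto simp: nd_def)
    next
      case False
      show ?thesis
      proof (cases "i \<in> {1..N}")
        case True thus ?thesis using eq t False by (auto simp: nd_def)
      next
        case F2: False thus ?thesis using out False by (auto simp: nd_def)
      qed
    qed
  qed
qed

lemma the_hdec: "(THE n. hdec N c n) = nd N c"
  using hdec_nd hdec_unique by blast

lemma ht_int: "int (ht N c) = (\<Sum>i\<in>{1..N}. c i) + int (Suc N) * mx N c"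
proof -
  have "int (ht N c) = (\<Sum>i\<in>{1..Suc N}. int (nd N c i))" unfolding ht_def the_hdec by simp
  also have "\<dots> = (\<Sum>i\<in>{1..N}. int (nd N c i)) + int (nd N c (Suc N))" by simp
  also have "(\<Sum>i\<in>{1..N}. int (nd N c i)) = (\<Sum>i\<in>{1..N}. c i + mx N c)"
    by (rule sum.cong) (use mx_ge2[of _ N c] in \<open>auto simp: nd_def\<close>)
  also have "\<dots> = (\<Sum>i\<in>{1..N}. c i) + int N * mx N c" by (simp add: sum.distrib)
  finally show ?thesis using mx_ge0[of N c] by (simp add: nd_def algebra_simps)
qed

lemma mx_sub: "mx N (a + b) \<le> mx N a + mx N b"
  using mx_ge[of _ N a] mx_ge[of _ N b] mx_ge0[of N a] mx_ge0[of N b]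
  by (intro mx_le) force+

lemma ht_sub: "ht N (a + b) \<le> ht N a + ht N b"
proof -
  have "int (ht N (a + b)) \<le> int (ht N a) + int (ht N b)"
    unfolding ht_int using mx_sub[of N a b] mult_left_mono[OF mx_sub[of N a b], of "int N"]
    by (simp add: sum.distrib algebra_simps)
  thus ?thesis by simp
qed

lemma ht_defect: "int (ht N a + ht N b - ht N (a + b)) = int (Suc N) * (mx N a + mx N b - mx N (a + b))"
  using ht_sub[of N a b] unfolding of_nat_diff[OF ht_sub] of_nat_add ht_int
  by (simp add: sum.distrib algebra_simps)

lemma ht_zero: "ht N (\<lambda>_. 0) = 0"
proof -
  have "mx N (\<lambda>_. 0) = 0" using mx_ge0 by (intro antisym mx_le) auto
  hence "int (ht N (\<lambda>_. 0)) = 0" unfolding ht_int by simp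
  thus ?thesis by simp
qed

lemma inDelta_iff: assumes "j \<in> {1..Suc N}"
  shows "inDelta N j c \<longleftrightarrow> (if j = Suc N then mx N c = 0 else mx N c = - c j)"
proof (cases "j = Suc N")
  case True
  show ?thesis
  proof
    assume "inDelta N j c"
    then obtain n where "n j = 0" "\<forall>i\<in>{1..N}. c i = int (n i) - int (n (Suc N))"
      unfolding inDelta_def by blast
    hence "\<forall>i\<in>{1..N}. - c i \<le> 0" using True by auto
    thus "if j = Suc N then mx N c = 0 else mx N c = - c j"
      using True mx_le[of 0 N c] mx_ge0[of N c] by auto
  next
    assume "if j = Suc N then mx N c = 0 else mx N c = - c j"
    hence m: "mx N c = 0" using True by simp
    show "inDelta N j c" unfolding inDelta_def
      by (rule exI[of _ "\<lambda>i. if i = Suc N then 0 else nat (c i)"])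
         (use True m mx_ge[of _ N c] in force)
  qed
next
  case False
  hence jN: "j \<in> {1..N}" using assms by auto
  show ?thesis
  proof
    assume "inDelta N j c"
    then obtain n where n: "n j = 0" "\<forall>i\<in>{1..N}. c i = int (n i) - int (n (Suc N))"
      unfolding inDelta_def by blast
    have "mx N c \<le> - c j" using n jN by (intro mx_le) force+
    thus "if j = Suc N then mx N c = 0 else mx N c = - c j" using False mx_ge[OF jN, of c] by simp
  next
    assume "if j = Suc N then mx N c = 0 else mx N c = - c j"
    hence m: "mx N c = - c j" using False by simp
    show "inDelta N j c" unfolding inDelta_def
      by (rule exI[of _ "\<lambda>i. if i = Suc N then nat (- c j) else nat (c i - c j)"])
         (use False jN m mx_ge[of _ N c] mx_ge0[of N c] in force)
  qed
qed

lemma defect_zero_iff: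
  "ht N a + ht N b - ht N (a + b) = 0 \<longleftrightarrow> (\<exists>j\<in>{1..Suc N}. inDelta N j a \<and> inDelta N j b)"
proof -
  have "ht N a + ht N b - ht N (a + b) = 0 \<longleftrightarrow> mx N (a + b) = mx N a + mx N b"
    using ht_defect[of N a b] mx_sub[of N a b]
    by (metis (mono_tags, opaque_lifting) diff_ge_0_iff_ge eq_iff_diff_eq_0 mult_eq_0_iff of_nat_0 of_nat_eq_0_iff nat_int old.nat.distinct(1))
  also have "\<dots> \<longleftrightarrow> (\<exists>j\<in>{1..Suc N}. inDelta N j a \<and> inDelta N j b)"
  proof
    assume e: "mx N (a + b) = mx N a + mx N b"
    show "\<exists>j\<in>{1..Suc N}. inDelta N j a \<and> inDelta N j b"
      using mx_in[of N "a + b"]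
    proof
      assume "mx N (a + b) = 0"
      hence "mx N a = 0" "mx N b = 0" using e mx_ge0[of N a] mx_ge0[of N b] by auto
      thus ?thesis by (intro bexI[of _ "Suc N"]) (auto simp: inDelta_iff)
    next
      assume "\<exists>i\<in>{1..N}. mx N (a + b) = - (a + b) i"
      then obtain i where i: "i \<in> {1..N}" "mx N (a + b) = - (a + b) i" by blast
      hence "mx N a = - a i" "mx N b = - b i" using e mx_ge[OF i(1), of a] mx_ge[OF i(1), of b] by auto
      thus ?thesis using i by (intro bexI[of _ i]) (auto simp: inDelta_iff)
    qed
  next
    assume "\<exists>j\<in>{1..Suc N}. inDelta N j a \<and> inDelta N j b"
    then obtain j where j: "j \<in> {1..Suc N}" "inDelta N j a" "inDelta N j b" by blast
    show "mx N (a + b) = mx N a + mx N b"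
    proof (cases "j = Suc N")
      case True thus ?thesis using j mx_sub[of N a b] mx_ge0[of N "a+b"] by (auto simp: inDelta_iff)
    next
      case False hence "j \<in> {1..N}" using j by auto
      thus ?thesis using j False mx_sub[of N a b] mx_ge[of j N "a+b"] by (auto simp: inDelta_iff)
    qed
  qed
  finally show ?thesis .
qed



definition spt :: "vec \<Rightarrow> basis set" where "spt v = {x. v x \<noteq> 0}"

lemma sum_apply: "(\<Sum>i\<in>I. f i) x = (\<Sum>i\<in>I. f i x)"
  by (induction I rule: infinite_finite_induct) auto

lemma sc_apply: "sc c v x = c * v x" by (simp add: sc_def)
lemma sc_0[simp]: "sc 0 v = 0" "sc c 0 = 0" by (auto simp: sc_def fun_eq_iff)
lemma sc_1[simp]: "sc 1 v = v" by (auto simp: sc_def)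
lemma sc_sc[simp]: "sc c (sc d v) = sc (c * d) v" by (auto simp: sc_def)
lemma sc_add: "sc c (v + w) = sc c v + sc c w" by (auto simp: sc_def fun_eq_iff algebra_simps)
lemma sc_diff: "sc c (v - w) = sc c v - sc c w" by (auto simp: sc_def fun_eq_iff algebra_simps)
lemma sc_distrib: "sc (c + d) v = sc c v + sc d v" by (auto simp: sc_def fun_eq_iff algebra_simps)
lemma sc_sum: "sc c (\<Sum>i\<in>I. f i) = (\<Sum>i\<in>I. sc c (f i))"
  by (auto simp: fun_eq_iff sum_apply sum_distrib_left sc_apply)
lemma sum_sc: "(\<Sum>i\<in>I. sc (f i) v) = sc (\<Sum>i\<in>I. f i) v"
  by (auto simp: fun_eq_iff sum_apply sum_distrib_right sc_apply)

lemma mult_if1[simp]: "(a::complex) * (if P then 1 else 0) = (if P then a else 0)" by simp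
lemma bas_apply: "bas b x = (if x = b then 1 else 0)" by (simp add: bas_def)
lemma spt_bas[simp]: "spt (bas b) = {b}" by (auto simp: spt_def bas_def)

lemma VL_finite: "v \<in> VL N \<Longrightarrow> finite (spt v)" by (simp add: VL_def spt_def)
lemma VL_valid: "v \<in> VL N \<Longrightarrow> x \<in> spt v \<Longrightarrow> valid N x" unfolding VL_def spt_def by blast
lemma VL_I: "finite (spt v) \<Longrightarrow> (\<And>x. x \<in> spt v \<Longrightarrow> valid N x) \<Longrightarrow> v \<in> VL N"
  by (simp add: VL_def spt_def)

lemma VL_zero[simp]: "0 \<in> VL N" by (simp add: VL_def)
lemma VL_add: assumes "v \<in> VL N" "w \<in> VL N" shows "v + w \<in> VL N"
proof (rule VL_I)
  have "spt (v + w) \<subseteq> spt v \<union> spt w" by (auto simp: spt_def)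
  thus "finite (spt (v + w))" using VL_finite assms by (meson finite_Un finite_subset)
  fix x assume "x \<in> spt (v + w)"
  hence "x \<in> spt v \<or> x \<in> spt w" by (auto simp: spt_def)
  thus "valid N x" using VL_valid assms by blast
qed
lemma VL_sc: assumes "v \<in> VL N" shows "sc c v \<in> VL N"
proof (rule VL_I)
  have "spt (sc c v) \<subseteq> spt v" by (auto simp: spt_def sc_apply)
  thus "finite (spt (sc c v))" using VL_finite assms by (meson finite_subset)
  fix x assume "x \<in> spt (sc c v)"
  hence "x \<in> spt v" by (auto simp: spt_def sc_apply)
  thus "valid N x" using VL_valid assms by blast
qed
lemma uminus_sc: "- v = sc (-1) v" by (auto simp: fun_eq_iff sc_def)
lemma VL_uminus: "v \<in> VL N \<Longrightarrow> - v \<in> VL N"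
  using VL_sc[of v N "-1"] by (simp add: uminus_sc)
lemma VL_diff: "v \<in> VL N \<Longrightarrow> w \<in> VL N \<Longrightarrow> v - w \<in> VL N"
  using VL_add[of v N "- w"] VL_uminus by simp
lemma VL_sum: "(\<And>i. i \<in> I \<Longrightarrow> f i \<in> VL N) \<Longrightarrow> (\<Sum>i\<in>I. f i) \<in> VL N"
  by (induction I rule: infinite_finite_induct) (auto intro: VL_add)
lemma VL_bas: "valid N b \<Longrightarrow> bas b \<in> VL N" by (rule VL_I) auto
lemma VL_bas_spt: "v \<in> VL N \<Longrightarrow> x \<in> spt v \<Longrightarrow> bas x \<in> VL N"
  using VL_bas VL_valid by blast

lemma repr: assumes "finite (spt v)" shows "v = (\<Sum>x\<in>spt v. sc (v x) (bas x))"
proof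
  fix y
  have "(\<Sum>x\<in>spt v. sc (v x) (bas x)) y = (\<Sum>x\<in>spt v. if y = x then v x else 0)"
    by (simp add: sum_apply bas_apply sc_apply)
  also have "\<dots> = v y" using assms by (simp add: spt_def)
  finally show "v y = (\<Sum>x\<in>spt v. sc (v x) (bas x)) y" by simp
qed

lemma repr_super: assumes "finite X" "spt v \<subseteq> X" shows "v = (\<Sum>x\<in>X. sc (v x) (bas x))"
proof
  fix y
  have "(\<Sum>x\<in>X. sc (v x) (bas x)) y = (\<Sum>x\<in>X. if y = x then v x else 0)"
    by (simp add: sum_apply bas_apply sc_apply)
  also have "\<dots> = v y" using assms by (auto simp: spt_def)
  finally show "v y = (\<Sum>x\<in>X. sc (v x) (bas x)) y" by simp
qed

definition lin_on :: "nat \<Rightarrow> (vec \<Rightarrow> vec) \<Rightarrow> bool" where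
  "lin_on N F \<longleftrightarrow> (\<forall>a\<in>VL N. \<forall>b\<in>VL N. \<forall>c. F (a + b) = F a + F b \<and> F (sc c a) = sc c (F a))"

lemma lin_on_zero: "lin_on N F \<Longrightarrow> F 0 = 0"
  unfolding lin_on_def by (metis VL_zero sc_0(1))

lemma lin_on_add: "lin_on N F \<Longrightarrow> a \<in> VL N \<Longrightarrow> b \<in> VL N \<Longrightarrow> F (a + b) = F a + F b"
  unfolding lin_on_def by blast
lemma lin_on_sc: "lin_on N F \<Longrightarrow> a \<in> VL N \<Longrightarrow> F (sc c a) = sc c (F a)"
  unfolding lin_on_def by blast

lemma lin_on_sum: assumes "lin_on N F" "\<And>i. i \<in> I \<Longrightarrow> g i \<in> VL N"
  shows "F (\<Sum>i\<in>I. sc (c i) (g i)) = (\<Sum>i\<in>I. sc (c i) (F (g i)))"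
  using assms(2)
proof (induction I rule: infinite_finite_induct)
  case (infinite A)
  have e1: "(\<Sum>i\<in>A. sc (c i) (g i)) = 0" by (rule sum.infinite[OF infinite(1)])
  have e2: "(\<Sum>i\<in>A. sc (c i) (F (g i))) = 0" by (rule sum.infinite[OF infinite(1)])
  show ?case unfolding e1 e2 by (rule lin_on_zero[OF assms(1)])
next
  case empty show ?case unfolding sum.empty by (rule lin_on_zero[OF assms(1)])
next
  case (insert x A)
  have s: "(\<Sum>i\<in>A. sc (c i) (g i)) \<in> VL N" using insert.prems by (intro VL_sum VL_sc) simp
  have gx: "g x \<in> VL N" using insert.prems by simp
  have ih: "F (\<Sum>i\<in>A. sc (c i) (g i)) = (\<Sum>i\<in>A. sc (c i) (F (g i)))"
    using insert.IH insert.prems by simp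
  show ?case unfolding sum.insert[OF insert.hyps] lin_on_add[OF assms(1) VL_sc[OF gx] s]
     lin_on_sc[OF assms(1) gx] ih ..
qed

lemma lin_expand: assumes "lin_on N F" "v \<in> VL N"
  shows "F v = (\<Sum>x\<in>spt v. sc (v x) (F (bas x)))"
proof -
  have "F v = F (\<Sum>x\<in>spt v. sc (v x) (bas x))" by (rule arg_cong[OF repr[OF VL_finite[OF assms(2)]]])
  also have "\<dots> = (\<Sum>x\<in>spt v. sc (v x) (F (bas x)))"
    by (rule lin_on_sum[OF assms(1)]) (rule VL_bas_spt[OF assms(2)])
  finally show ?thesis .
qed

definition bil :: "nat \<Rightarrow> (int \<Rightarrow> vec \<Rightarrow> vec \<Rightarrow> vec) \<Rightarrow> bool" where
  "bil N P \<longleftrightarrow> (\<forall>k. \<forall>a\<in>VL N. \<forall>b\<in>VL N. P k a b \<in> VL N) \<and>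
     (\<forall>k. \<forall>a\<in>VL N. \<forall>a'\<in>VL N. \<forall>b\<in>VL N. \<forall>c.
        P k (a + a') b = P k a b + P k a' b \<and> P k (sc c a) b = sc c (P k a b) \<and>
        P k b (a + a') = P k b a + P k b a' \<and> P k b (sc c a) = sc c (P k b a))"

lemma vsa_bil: "vsa (VL N) Y one \<Longrightarrow> bil N Y" unfolding vsa_def bil_def by (elim conjE, intro conjI) assumption+

lemma bil_VL: "bil N P \<Longrightarrow> a \<in> VL N \<Longrightarrow> b \<in> VL N \<Longrightarrow> P k a b \<in> VL N"
  unfolding bil_def by blast
lemma bil_lin1: "bil N P \<Longrightarrow> b \<in> VL N \<Longrightarrow> lin_on N (\<lambda>a. P k a b)"
  unfolding bil_def lin_on_def by blast
lemma bil_lin2: "bil N P \<Longrightarrow> a \<in> VL N \<Longrightarrow> lin_on N (P k a)"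
  unfolding bil_def lin_on_def by blast
lemma bil_zero1: "bil N P \<Longrightarrow> b \<in> VL N \<Longrightarrow> P k 0 b = 0"
  using lin_on_zero[OF bil_lin1] by blast
lemma bil_zero2: "bil N P \<Longrightarrow> a \<in> VL N \<Longrightarrow> P k a 0 = 0"
  using lin_on_zero[OF bil_lin2] by blast
lemma bil_sc1: assumes "bil N P" "a \<in> VL N" "b \<in> VL N" shows "P k (sc c a) b = sc c (P k a b)"
  using bil_lin1[OF assms(1,3), of k] assms(2) unfolding lin_on_def by simp
lemma bil_sc2: assumes "bil N P" "a \<in> VL N" "b \<in> VL N" shows "P k a (sc c b) = sc c (P k a b)"
  using bil_lin2[OF assms(1,2), of k] assms(3) unfolding lin_on_def by simp
lemma bil_add1: assumes "bil N P" "a \<in> VL N" "a' \<in> VL N" "b \<in> VL N" shows "P k (a + a') b = P k a b + P k a' b"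
  using bil_lin1[OF assms(1,4), of k] assms(2,3) unfolding lin_on_def by simp
lemma bil_add2: assumes "bil N P" "a \<in> VL N" "b \<in> VL N" "b' \<in> VL N" shows "P k a (b + b') = P k a b + P k a b'"
  using bil_lin2[OF assms(1,2), of k] assms(3,4) unfolding lin_on_def by simp

lemma expand2: assumes "bil N P" "u \<in> VL N" "v \<in> VL N"
  shows "P k u v = (\<Sum>x\<in>spt u. \<Sum>y\<in>spt v. sc (u x * v y) (P k (bas x) (bas y)))"
proof -
  have "P k u v = (\<Sum>x\<in>spt u. sc (u x) (P k (bas x) v))"
    by (rule lin_expand[OF bil_lin1[OF assms(1,3)] assms(2)])
  also have "\<dots> = (\<Sum>x\<in>spt u. sc (u x) (\<Sum>y\<in>spt v. sc (v y) (P k (bas x) (bas y))))"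
    by (rule sum.cong[OF refl], subst lin_expand[OF bil_lin2[OF assms(1)] assms(3)])
       (use assms(2) VL_bas_spt in auto)
  also have "\<dots> = (\<Sum>x\<in>spt u. \<Sum>y\<in>spt v. sc (u x * v y) (P k (bas x) (bas y)))"
    by (simp add: sc_sum)
  finally show ?thesis .
qed

lemma hom_add: assumes "hom v p" "hom w p" shows "hom (v + w) p"
  unfolding hom_def
proof (intro allI impI)
  fix b assume "(v + w) b \<noteq> 0"
  hence "v b \<noteq> 0 \<or> w b \<noteq> 0" by auto
  thus "odd (card (fst (snd b))) = p" using assms unfolding hom_def by blast
qed
lemma hom_sc: assumes "hom v p" shows "hom (sc c v) p"
  unfolding hom_def
proof (intro allI impI)
  fix b assume "sc c v b \<noteq> 0"
  hence "v b \<noteq> 0" by (auto simp: sc_apply)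
  thus "odd (card (fst (snd b))) = p" using assms unfolding hom_def by blast
qed
lemma hom_zero: "hom 0 p" by (auto simp: hom_def)
lemma hom_sum: "(\<And>i. i \<in> I \<Longrightarrow> hom (f i) p) \<Longrightarrow> hom (\<Sum>i\<in>I. f i) p"
  by (induction I rule: infinite_finite_induct) (auto intro: hom_add hom_zero)
lemma hom_bas: "hom a p \<Longrightarrow> x \<in> spt a \<Longrightarrow> hom (bas x) p"
  by (auto simp: hom_def spt_def bas_def)
lemma hom_bas_self: "hom (bas x) (odd (card (fst (snd x))))"
  by (auto simp: hom_def bas_def)

lemma fsum_eq: assumes "\<And>j. j \<ge> J \<Longrightarrow> f j = 0" shows "fsum f = (\<Sum>j<J. f j)"
proof -
  have "{j. f j \<noteq> 0} \<subseteq> {..<J}" using assms not_le by blast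
  thus ?thesis unfolding fsum_def by (intro sum.mono_neutral_left) auto
qed

lemma fsum_single: assumes "\<And>j. j \<noteq> 0 \<Longrightarrow> f j = 0" shows "fsum f = f 0"
  using fsum_eq[of 1 f] assms by simp

lemma fsum_sc: "fsum (\<lambda>j. sc c (f j)) = sc c (fsum f)"
proof (cases "c = 0")
  case True thus ?thesis by (simp add: fsum_def)
next
  case False
  have "\<And>j. sc c (f j) = 0 \<longleftrightarrow> f j = 0" using False by (auto simp: sc_def fun_eq_iff)
  hence "{j. sc c (f j) \<noteq> 0} = {j. f j \<noteq> 0}" by blast
  thus ?thesis unfolding fsum_def by (simp only: sc_sum)
qed



definition LT :: "(int \<Rightarrow> vec \<Rightarrow> vec \<Rightarrow> vec) \<Rightarrow> vec \<Rightarrow> vec \<Rightarrow> vec \<Rightarrow> int \<Rightarrow> int \<Rightarrow> int \<Rightarrow> nat \<Rightarrow> vec" where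
  "LT Y a b c m n k j = sc (of_int m gchoose j) (Y (m + k - int j) (Y (n + int j) a b) c)"

definition RT :: "(int \<Rightarrow> vec \<Rightarrow> vec \<Rightarrow> vec) \<Rightarrow> vec \<Rightarrow> vec \<Rightarrow> vec \<Rightarrow> bool \<Rightarrow> bool \<Rightarrow> int \<Rightarrow> int \<Rightarrow> int \<Rightarrow> nat \<Rightarrow> vec" where
  "RT Y a b c p p' m n k j = sc ((-1) ^ j * (of_int n gchoose j))
                  (Y (m + n - int j) a (Y (k + int j) b c)
                   - sc ((if even n then 1 else -1) * (if p \<and> p' then -1 else 1))
                        (Y (n + k - int j) b (Y (m + int j) a c)))"

lemma vsa_iff: "vsa S Y one \<longleftrightarrow>
     one \<in> S \<and> hom one False \<and>
     (\<forall>k. \<forall>a\<in>S. \<forall>b\<in>S. Y k a b \<in> S) \<and>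
     (\<forall>k. \<forall>a\<in>S. \<forall>a'\<in>S. \<forall>b\<in>S. \<forall>c.
        Y k (a + a') b = Y k a b + Y k a' b \<and> Y k (sc c a) b = sc c (Y k a b) \<and>
        Y k b (a + a') = Y k b a + Y k b a' \<and> Y k b (sc c a) = sc c (Y k b a)) \<and>
     (\<forall>a\<in>S. \<forall>b\<in>S. \<exists>M. \<forall>k\<ge>M. Y k a b = 0) \<and>
     (\<forall>a\<in>S. Y (-1) one a = a \<and> (\<forall>k. k \<noteq> -1 \<longrightarrow> Y k one a = 0)) \<and>
     (\<forall>a\<in>S. Y (-1) a one = a \<and> (\<forall>k\<ge>0. Y k a one = 0)) \<and>
     (\<forall>k. \<forall>a\<in>S. \<forall>b\<in>S. \<forall>p p'. hom a p \<longrightarrow> hom b p' \<longrightarrow> hom (Y k a b) (p \<noteq> p')) \<and>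
     (\<forall>a\<in>S. \<forall>b\<in>S. \<forall>c\<in>S. \<forall>p p'. hom a p \<longrightarrow> hom b p' \<longrightarrow> (\<forall>m n k :: int.
        fsum (LT Y a b c m n k) = fsum (RT Y a b c p p' m n k)))"
  unfolding vsa_def LT_def[abs_def] RT_def[abs_def] by (rule refl)

lemma vsa_one: "vsa S Y one \<Longrightarrow> one \<in> S" "vsa S Y one \<Longrightarrow> hom one False"
  unfolding vsa_iff by (elim conjE, assumption)+
lemma vsa_trunc: assumes "vsa S Y one" "a \<in> S" "b \<in> S" shows "\<exists>M. \<forall>k\<ge>M. Y k a b = 0"
proof -
  have "\<forall>a\<in>S. \<forall>b\<in>S. \<exists>M. \<forall>k\<ge>M. Y k a b = 0" using assms(1) unfolding vsa_iff by (elim conjE)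
  thus ?thesis using assms by blast
qed
lemma vsa_vac1: assumes "vsa S Y one" "a \<in> S"
  shows "Y (-1) one a = a" "k \<noteq> -1 \<Longrightarrow> Y k one a = 0"
proof -
  have "\<forall>a\<in>S. Y (-1) one a = a \<and> (\<forall>k. k \<noteq> -1 \<longrightarrow> Y k one a = 0)" using assms(1) unfolding vsa_iff by (elim conjE)
  thus "Y (-1) one a = a" "k \<noteq> -1 \<Longrightarrow> Y k one a = 0" using assms by blast+
qed
lemma vsa_vac2: assumes "vsa S Y one" "a \<in> S"
  shows "Y (-1) a one = a" "k \<ge> 0 \<Longrightarrow> Y k a one = 0"
proof -
  have "\<forall>a\<in>S. Y (-1) a one = a \<and> (\<forall>k\<ge>0. Y k a one = 0)" using assms(1) unfolding vsa_iff by (elim conjE)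
  thus "Y (-1) a one = a" "k \<ge> 0 \<Longrightarrow> Y k a one = 0" using assms by blast+
qed
lemma vsa_hom: assumes "vsa S Y one" "a \<in> S" "b \<in> S" "hom a p" "hom b p'"
  shows "hom (Y k a b) (p \<noteq> p')"
proof -
  have "\<forall>k. \<forall>a\<in>S. \<forall>b\<in>S. \<forall>p p'. hom a p \<longrightarrow> hom b p' \<longrightarrow> hom (Y k a b) (p \<noteq> p')"
    using assms(1) unfolding vsa_iff by (elim conjE)
  thus ?thesis using assms by blast
qed
lemma vsa_borch: assumes "vsa S Y one" "a \<in> S" "b \<in> S" "c \<in> S" "hom a p" "hom b p'"
  shows "fsum (LT Y a b c m n k) = fsum (RT Y a b c p p' m n k)"
proof -
  have "\<forall>a\<in>S. \<forall>b\<in>S. \<forall>c\<in>S. \<forall>p p'. hom a p \<longrightarrow> hom b p' \<longrightarrow> (\<forall>m n k :: int.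
        fsum (LT Y a b c m n k) = fsum (RT Y a b c p p' m n k))"
    using assms(1) unfolding vsa_iff by (elim conjE)
  thus ?thesis using assms by blast
qed

lemma lin_bas: "lin f (bas x) = f x"
proof -
  have "{b. bas x b \<noteq> 0} = {x}" by (auto simp: bas_def)
  thus ?thesis unfolding lin_def by (simp add: bas_def)
qed

lemma lin_apply: assumes "finite (spt v)" shows "lin f v z = (\<Sum>b\<in>spt v. v b * f b z)"
  unfolding lin_def spt_def[symmetric] by (simp add: sum_apply sc_apply)

definition hvec :: "nat \<Rightarrow> vec" where "hvec i = bas ({#(True, i, 1)#}, {}, lzero)"

lemma lzero_lat: "lzero \<in> lat N" by (simp add: lzero_def lat_def)

lemma hvec_VL: "1 \<le> i \<Longrightarrow> i \<le> N \<Longrightarrow> hvec i \<in> VL N"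
  unfolding hvec_def by (rule VL_bas) (simp add: valid_def lzero_lat)

lemma hvec_hom: "hom (hvec i) False" unfolding hvec_def hom_def bas_def by simp

lemma heis0: "heis (True, i) 0 x = sc (of_int (Apart_b x i)) (bas x)"
  unfolding heis_def Apart_b_def by (cases x) auto

lemma lin_heis0: assumes "finite (spt v)" shows "lin (heis (True, i) 0) v z = of_int (Apart_b z i) * v z"
proof -
  have "lin (heis (True, i) 0) v z = (\<Sum>b\<in>spt v. if b = z then v b * of_int (Apart_b z i) else 0)"
    unfolding lin_apply[OF assms] heis0 by (intro sum.cong) (auto simp: sc_apply bas_def)
  also have "\<dots> = of_int (Apart_b z i) * v z" using assms by (auto simp: spt_def)
  finally show ?thesis .
qed

lemma valid_Apart: assumes "valid N x" "i \<notin> {1..N}" shows "Apart_b x i = 0"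
proof -
  have "snd (snd x) \<in> lat N" using assms(1) unfolding valid_def by blast
  moreover have "i = 0 \<or> i > N" using assms(2) by auto
  ultimately show ?thesis unfolding lat_def Apart_b_def by blast
qed

lemma lat_field:
  assumes "lattice_vsa N Y" "1 \<le> i" "i \<le> N" "v \<in> VL N"
  shows "Y m (hvec i) v = lin (heis (True, i) m) v"
  using assms unfolding lattice_vsa_def hvec_def by blast

lemma lat_vsa: "lattice_vsa N Y \<Longrightarrow> vsa (VL N) Y vac" unfolding lattice_vsa_def by blast

lemma Apart_Y:
  assumes L: "lattice_vsa N Y" and x: "valid N x" and y: "valid N y"
  shows "has_Apart N (Apart_b x + Apart_b y) (Y k (bas x) (bas y))"
proof -
  have V: "vsa (VL N) Y vac" using lat_vsa[OF L] .
  have B: "bil N Y" using vsa_bil[OF V] .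
  have bx: "bas x \<in> VL N" and bY: "bas y \<in> VL N" using VL_bas x y by auto
  define W where "W = Y k (bas x) (bas y)"
  have WV: "W \<in> VL N" unfolding W_def by (rule bil_VL[OF B bx bY])
  have key: "\<And>z. W z \<noteq> 0 \<Longrightarrow> i \<in> {1..N} \<Longrightarrow> Apart_b z i = Apart_b x i + Apart_b y i" for i
  proof -
    fix z assume Wz: "W z \<noteq> 0" and i: "i \<in> {1..N}"
    have hV: "hvec i \<in> VL N" using hvec_VL i by auto
    have bor: "fsum (LT Y (hvec i) (bas x) (bas y) 0 0 k) =
               fsum (RT Y (hvec i) (bas x) (bas y) False (odd (card (fst (snd x)))) 0 0 k)"
      by (rule vsa_borch[OF V hV bx bY hvec_hom hom_bas_self])
    have l: "fsum (LT Y (hvec i) (bas x) (bas y) 0 0 k) = sc (of_int (Apart_b x i)) W"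
    proof -
      have "fsum (LT Y (hvec i) (bas x) (bas y) 0 0 k) = LT Y (hvec i) (bas x) (bas y) 0 0 k 0"
        by (rule fsum_single) (simp add: LT_def gbinomial_0_left)
      also have "\<dots> = Y k (Y 0 (hvec i) (bas x)) (bas y)" by (simp add: LT_def)
      also have "Y 0 (hvec i) (bas x) = sc (of_int (Apart_b x i)) (bas x)"
        using lat_field[OF L _ _ bx, of i 0] i by (simp add: lin_bas heis0)
      also have "Y k (sc (of_int (Apart_b x i)) (bas x)) (bas y) = sc (of_int (Apart_b x i)) W"
        unfolding W_def by (rule bil_sc1[OF B bx bY])
      finally show ?thesis .
    qed
    have r: "fsum (RT Y (hvec i) (bas x) (bas y) False (odd (card (fst (snd x)))) 0 0 k)
           = lin (heis (True, i) 0) W - sc (of_int (Apart_b y i)) W"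
    proof -
      have "fsum (RT Y (hvec i) (bas x) (bas y) False (odd (card (fst (snd x)))) 0 0 k)
          = RT Y (hvec i) (bas x) (bas y) False (odd (card (fst (snd x)))) 0 0 k 0"
        by (rule fsum_single) (simp add: RT_def gbinomial_0_left)
      also have "\<dots> = Y 0 (hvec i) W - Y k (bas x) (Y 0 (hvec i) (bas y))" by (simp add: RT_def W_def)
      also have "Y 0 (hvec i) (bas y) = sc (of_int (Apart_b y i)) (bas y)"
        using lat_field[OF L _ _ bY, of i 0] i by (simp add: lin_bas heis0)
      also have "Y k (bas x) (sc (of_int (Apart_b y i)) (bas y)) = sc (of_int (Apart_b y i)) W"
        unfolding W_def by (rule bil_sc2[OF B bx bY])
      also have "Y 0 (hvec i) W = lin (heis (True, i) 0) W"
        using lat_field[OF L _ _ WV, of i 0] i by simp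
      finally show ?thesis .
    qed
    have "sc (of_int (Apart_b x i)) W z = lin (heis (True, i) 0) W z - sc (of_int (Apart_b y i)) W z"
      using bor l r by simp
    hence "of_int (Apart_b x i) * W z = of_int (Apart_b z i) * W z - of_int (Apart_b y i) * W z"
      unfolding lin_heis0[OF VL_finite[OF WV]] by (simp add: sc_apply)
    hence "(of_int (Apart_b x i + Apart_b y i) - of_int (Apart_b z i)) * W z = (0::complex)"
      by (simp add: algebra_simps)
    hence "(of_int (Apart_b x i + Apart_b y i) :: complex) = of_int (Apart_b z i)" using Wz by simp
    thus "Apart_b z i = Apart_b x i + Apart_b y i" by (simp only: of_int_eq_iff)
  qed
  show ?thesis unfolding has_Apart_def W_def[symmetric]
  proof (intro conjI allI impI WV)
    fix z assume Wz: "W z \<noteq> 0"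
    have vz: "valid N z" using VL_valid[OF WV] Wz by (simp add: spt_def)
    show "Apart_b z = Apart_b x + Apart_b y"
    proof
      fix i show "Apart_b z i = (Apart_b x + Apart_b y) i"
      proof (cases "i \<in> {1..N}")
        case True thus ?thesis using key[OF Wz] by simp
      next
        case False thus ?thesis using valid_Apart[OF vz False] valid_Apart[OF x False] valid_Apart[OF y False] by simp
      qed
    qed
  qed
qed



lemma finite_bound:
  fixes Q :: "'b \<Rightarrow> 'a::linorder \<Rightarrow> bool"
  assumes "finite T" "\<forall>t\<in>T. \<exists>M. \<forall>j\<ge>M. Q t j"
  shows "\<exists>M. \<forall>t\<in>T. \<forall>j\<ge>M. Q t j"
  using assms
proof (induction T rule: finite_induct)
  case empty thus ?case by auto
next
  case (insert x F)
  obtain M1 where M1: "\<forall>t\<in>F. \<forall>j\<ge>M1. Q t j" using insert by blast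
  obtain M2 where M2: "\<forall>j\<ge>M2. Q x j" using insert by blast
  show ?case by (rule exI[of _ "max M1 M2"]) (use M1 M2 in auto)
qed

lemma lin_on_sum1: assumes "lin_on N F" "\<And>i. i \<in> I \<Longrightarrow> g i \<in> VL N"
  shows "F (\<Sum>i\<in>I. g i) = (\<Sum>i\<in>I. F (g i))"
  using lin_on_sum[OF assms, where c="\<lambda>_. 1"] by simp

lemma lin_on_sum2: assumes "lin_on N F" "\<And>x y. x \<in> A \<Longrightarrow> y \<in> B \<Longrightarrow> U x y \<in> VL N"
  shows "F (\<Sum>x\<in>A. \<Sum>y\<in>B. sc (f x y) (U x y)) = (\<Sum>x\<in>A. \<Sum>y\<in>B. sc (f x y) (F (U x y)))"
proof -
  have "F (\<Sum>x\<in>A. \<Sum>y\<in>B. sc (f x y) (U x y)) = (\<Sum>x\<in>A. F (\<Sum>y\<in>B. sc (f x y) (U x y)))"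
    by (rule lin_on_sum1[OF assms(1)]) (use assms(2) in \<open>auto intro!: VL_sum VL_sc\<close>)
  also have "\<dots> = (\<Sum>x\<in>A. \<Sum>y\<in>B. sc (f x y) (F (U x y)))"
    by (rule sum.cong[OF refl], rule lin_on_sum[OF assms(1)]) (use assms(2) in auto)
  finally show ?thesis .
qed

definition TS :: "vec \<Rightarrow> vec \<Rightarrow> vec \<Rightarrow> (basis \<Rightarrow> basis \<Rightarrow> basis \<Rightarrow> vec) \<Rightarrow> vec" where
  "TS a b c F = (\<Sum>x\<in>spt a. \<Sum>y\<in>spt b. \<Sum>z\<in>spt c. sc (a x * b y * c z) (F x y z))"

lemma TS_sc: "sc g (TS a b c F) = TS a b c (\<lambda>x y z. sc g (F x y z))"
  unfolding TS_def sc_sum by (simp add: mult.commute)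

lemma TS_diff: "TS a b c F1 - TS a b c F2 = TS a b c (\<lambda>x y z. F1 x y z - F2 x y z)"
  unfolding TS_def by (simp add: sum_subtractf sc_diff)

lemma TS_cong: "(\<And>x y z. x \<in> spt a \<Longrightarrow> y \<in> spt b \<Longrightarrow> z \<in> spt c \<Longrightarrow> F x y z = G x y z) \<Longrightarrow>
   TS a b c F = TS a b c G"
  unfolding TS_def by (intro sum.cong refl) auto

lemma TS_zero: "TS a b c (\<lambda>x y z. 0) = 0" unfolding TS_def by simp

lemma TS_sumj: "(\<Sum>j\<in>J. TS a b c (F j)) = TS a b c (\<lambda>x y z. \<Sum>j\<in>J. F j x y z)"
  unfolding TS_def sc_sum
  by (subst sum.swap, rule sum.cong[OF refl], subst sum.swap, rule sum.cong[OF refl], subst sum.swap, rule refl)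

context
  fixes N P
  assumes B: "bil N P"
begin

lemma tri1: assumes "a \<in> VL N" "b \<in> VL N" "c \<in> VL N"
  shows "P i1 (P i2 a b) c = TS a b c (\<lambda>x y z. P i1 (P i2 (bas x) (bas y)) (bas z))"
proof -
  have V: "\<And>x y. x \<in> spt a \<Longrightarrow> y \<in> spt b \<Longrightarrow> P i2 (bas x) (bas y) \<in> VL N"
    using assms by (intro bil_VL[OF B] VL_bas_spt) auto
  have "P i1 (P i2 a b) c = P i1 (\<Sum>x\<in>spt a. \<Sum>y\<in>spt b. sc (a x * b y) (P i2 (bas x) (bas y))) c"
    using expand2[OF B assms(1,2)] by simp
  also have "\<dots> = (\<Sum>x\<in>spt a. \<Sum>y\<in>spt b. sc (a x * b y) (P i1 (P i2 (bas x) (bas y)) c))"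
    by (rule lin_on_sum2[OF bil_lin1[OF B assms(3)] V])
  also have "\<dots> = (\<Sum>x\<in>spt a. \<Sum>y\<in>spt b. sc (a x * b y)
        (\<Sum>z\<in>spt c. sc (c z) (P i1 (P i2 (bas x) (bas y)) (bas z))))"
    by (intro sum.cong refl arg_cong[where f="sc _"] lin_expand[OF bil_lin2[OF B] assms(3)] V)
  also have "\<dots> = TS a b c (\<lambda>x y z. P i1 (P i2 (bas x) (bas y)) (bas z))"
    unfolding TS_def sc_sum by simp
  finally show ?thesis .
qed

lemma tri2: assumes "a \<in> VL N" "b \<in> VL N" "c \<in> VL N"
  shows "P i1 a (P i2 b c) = TS a b c (\<lambda>x y z. P i1 (bas x) (P i2 (bas y) (bas z)))"
proof -
  have V: "\<And>y z. y \<in> spt b \<Longrightarrow> z \<in> spt c \<Longrightarrow> P i2 (bas y) (bas z) \<in> VL N"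
    using assms by (intro bil_VL[OF B] VL_bas_spt) auto
  have "P i1 a (P i2 b c) = P i1 a (\<Sum>y\<in>spt b. \<Sum>z\<in>spt c. sc (b y * c z) (P i2 (bas y) (bas z)))"
    using expand2[OF B assms(2,3)] by simp
  also have "\<dots> = (\<Sum>y\<in>spt b. \<Sum>z\<in>spt c. sc (b y * c z) (P i1 a (P i2 (bas y) (bas z))))"
    by (rule lin_on_sum2[OF bil_lin2[OF B assms(1)] V])
  also have "\<dots> = (\<Sum>y\<in>spt b. \<Sum>z\<in>spt c. sc (b y * c z)
        (\<Sum>x\<in>spt a. sc (a x) (P i1 (bas x) (P i2 (bas y) (bas z)))))"
    by (intro sum.cong refl arg_cong[where f="sc _"] lin_expand[OF bil_lin1[OF B] assms(1)] V)
  also have "\<dots> = (\<Sum>y\<in>spt b. \<Sum>z\<in>spt c. \<Sum>x\<in>spt a. sc (a x * b y * c z) (P i1 (bas x) (P i2 (bas y) (bas z))))"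
    unfolding sc_sum by (simp add: mult_ac)
  also have "\<dots> = (\<Sum>y\<in>spt b. \<Sum>x\<in>spt a. \<Sum>z\<in>spt c. sc (a x * b y * c z) (P i1 (bas x) (P i2 (bas y) (bas z))))"
    by (rule sum.cong[OF refl], rule sum.swap)
  also have "\<dots> = TS a b c (\<lambda>x y z. P i1 (bas x) (P i2 (bas y) (bas z)))"
    unfolding TS_def by (rule sum.swap)
  finally show ?thesis .
qed

lemma tri3: assumes "a \<in> VL N" "b \<in> VL N" "c \<in> VL N"
  shows "P i1 b (P i2 a c) = TS a b c (\<lambda>x y z. P i1 (bas y) (P i2 (bas x) (bas z)))"
proof -
  have "P i1 b (P i2 a c) = TS b a c (\<lambda>y x z. P i1 (bas y) (P i2 (bas x) (bas z)))"
    by (rule tri2[OF assms(2,1,3)])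
  also have "\<dots> = TS a b c (\<lambda>x y z. P i1 (bas y) (P i2 (bas x) (bas z)))"
    unfolding TS_def by (subst sum.swap) (simp add: mult_ac)
  finally show ?thesis .
qed

lemma LT_tri: assumes "a \<in> VL N" "b \<in> VL N" "c \<in> VL N"
  shows "LT P a b c m n k j = TS a b c (\<lambda>x y z. LT P (bas x) (bas y) (bas z) m n k j)"
  unfolding LT_def tri1[OF assms] TS_sc ..

lemma RT_tri: assumes "a \<in> VL N" "b \<in> VL N" "c \<in> VL N"
  shows "RT P a b c p p' m n k j = TS a b c (\<lambda>x y z. RT P (bas x) (bas y) (bas z) p p' m n k j)"
  unfolding RT_def tri2[OF assms] tri3[OF assms] by (simp only: TS_sc TS_diff)

lemma borch_reduce:
  assumes T: "\<forall>a\<in>VL N. \<forall>b\<in>VL N. \<exists>M. \<forall>k\<ge>M. P k a b = 0"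
    and bas: "\<And>x y z. valid N x \<Longrightarrow> valid N y \<Longrightarrow> valid N z \<Longrightarrow> hom (bas x) p \<Longrightarrow> hom (bas y) p' \<Longrightarrow>
        fsum (LT P (bas x) (bas y) (bas z) m n k) = fsum (RT P (bas x) (bas y) (bas z) p p' m n k)"
    and V: "a \<in> VL N" "b \<in> VL N" "c \<in> VL N" and H: "hom a p" "hom b p'"
  shows "fsum (LT P a b c m n k) = fsum (RT P a b c p p' m n k)"
proof -
  let ?T = "spt a \<times> spt b \<times> spt c"
  have fin: "finite ?T" using VL_finite V by auto
  have "\<exists>J::nat. \<forall>t\<in>?T. \<forall>j\<ge>J. LT P (bas (fst t)) (bas (fst (snd t))) (bas (snd (snd t))) m n k j = 0
        \<and> RT P (bas (fst t)) (bas (fst (snd t))) (bas (snd (snd t))) p p' m n k j = 0"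
  proof (rule finite_bound[OF fin], rule ballI)
    fix t assume t: "t \<in> ?T"
    obtain x y z where xyz: "t = (x, y, z)" by (cases t) auto
    have bx: "bas x \<in> VL N" and bY: "bas y \<in> VL N" and bz: "bas z \<in> VL N"
      using t xyz V VL_bas_spt by auto
    obtain M1 where M1: "\<forall>k\<ge>M1. P k (bas x) (bas y) = 0" using T bx bY by blast
    obtain M2 where M2: "\<forall>k'\<ge>M2. P k' (bas y) (bas z) = 0" using T bz bY by blast
    obtain M3 where M3: "\<forall>k'\<ge>M3. P k' (bas x) (bas z) = 0" using T bx bz by blast
    show "\<exists>J. \<forall>j\<ge>J. LT P (bas (fst t)) (bas (fst (snd t))) (bas (snd (snd t))) m n k j = 0
        \<and> RT P (bas (fst t)) (bas (fst (snd t))) (bas (snd (snd t))) p p' m n k j = 0"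
    proof (rule exI[of _ "nat (max (M1 - n) (max (M2 - k) (M3 - m)))"], intro allI impI)
      fix j :: nat assume j: "nat (max (M1 - n) (max (M2 - k) (M3 - m))) \<le> j"
      have "P (n + int j) (bas x) (bas y) = 0" using M1 j by auto
      moreover have "P (k + int j) (bas y) (bas z) = 0" using M2 j by auto
      moreover have "P (m + int j) (bas x) (bas z) = 0" using M3 j by auto
      ultimately show "LT P (bas (fst t)) (bas (fst (snd t))) (bas (snd (snd t))) m n k j = 0
        \<and> RT P (bas (fst t)) (bas (fst (snd t))) (bas (snd (snd t))) p p' m n k j = 0"
        unfolding LT_def RT_def xyz using bil_zero1[OF B bz] bil_zero2[OF B bx] bil_zero2[OF B bY] by simp
    qed
  qed
  then obtain J where J: "\<And>x y z j. x \<in> spt a \<Longrightarrow> y \<in> spt b \<Longrightarrow> z \<in> spt c \<Longrightarrow> j \<ge> J \<Longrightarrow>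
      LT P (bas x) (bas y) (bas z) m n k j = 0 \<and> RT P (bas x) (bas y) (bas z) p p' m n k j = 0"
    by fastforce
  have L: "fsum (LT P a b c m n k) = (\<Sum>j<J. LT P a b c m n k j)"
  proof (rule fsum_eq)
    fix j assume "J \<le> j"
    thus "LT P a b c m n k j = 0" unfolding LT_tri[OF V] using J by (simp add: TS_cong[where G="\<lambda>x y z. 0"] TS_zero)
  qed
  have R: "fsum (RT P a b c p p' m n k) = (\<Sum>j<J. RT P a b c p p' m n k j)"
  proof (rule fsum_eq)
    fix j assume "J \<le> j"
    thus "RT P a b c p p' m n k j = 0" unfolding RT_tri[OF V] using J by (simp add: TS_cong[where G="\<lambda>x y z. 0"] TS_zero)
  qed
  have "(\<Sum>j<J. LT P a b c m n k j) = TS a b c (\<lambda>x y z. \<Sum>j<J. LT P (bas x) (bas y) (bas z) m n k j)"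
    unfolding LT_tri[OF V] TS_sumj ..
  also have "\<dots> = TS a b c (\<lambda>x y z. \<Sum>j<J. RT P (bas x) (bas y) (bas z) p p' m n k j)"
  proof (rule TS_cong)
    fix x y z assume xyz: "x \<in> spt a" "y \<in> spt b" "z \<in> spt c"
    have "(\<Sum>j<J. LT P (bas x) (bas y) (bas z) m n k j) = fsum (LT P (bas x) (bas y) (bas z) m n k)"
      by (rule fsum_eq[symmetric]) (use J xyz in blast)
    also have "\<dots> = fsum (RT P (bas x) (bas y) (bas z) p p' m n k)"
      using bas VL_valid xyz V hom_bas H by blast
    also have "\<dots> = (\<Sum>j<J. RT P (bas x) (bas y) (bas z) p p' m n k j)"
      by (rule fsum_eq) (use J xyz in blast)
    finally show "(\<Sum>j<J. LT P (bas x) (bas y) (bas z) m n k j) = (\<Sum>j<J. RT P (bas x) (bas y) (bas z) p p' m n k j)" .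
  qed
  also have "\<dots> = (\<Sum>j<J. RT P a b c p p' m n k j)"
    unfolding RT_tri[OF V] TS_sumj ..
  finally show ?thesis using L R by simp
qed

end



definition qt :: "nat \<Rightarrow> complex \<Rightarrow> (int \<Rightarrow> vec \<Rightarrow> vec \<Rightarrow> vec) \<Rightarrow> int \<Rightarrow> vec \<Rightarrow> vec \<Rightarrow> basis \<Rightarrow> basis \<Rightarrow> vec" where
  "qt N q Y k a b x y = sc (a x * b y * q ^ qexp N x y) (Y k (bas x) (bas y))"

definition dft :: "nat \<Rightarrow> (nat \<Rightarrow> int) \<Rightarrow> (nat \<Rightarrow> int) \<Rightarrow> nat" where
  "dft N a b = ht N a + ht N b - ht N (a + b)"

lemma qexp_dft: "qexp N x y = dft N (Apart_b x) (Apart_b y)" unfolding qexp_def dft_def ..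

lemma qprod_spt: "qprod N q Y k a b = (\<Sum>x\<in>spt a. \<Sum>y\<in>spt b. qt N q Y k a b x y)"
  unfolding qprod_def qt_def spt_def ..

lemma qprod_super: assumes "finite X" "spt a \<subseteq> X" "finite W" "spt b \<subseteq> W"
  shows "qprod N q Y k a b = (\<Sum>x\<in>X. \<Sum>y\<in>W. qt N q Y k a b x y)"
proof -
  have "qprod N q Y k a b = (\<Sum>x\<in>X. \<Sum>y\<in>spt b. qt N q Y k a b x y)"
    unfolding qprod_spt by (rule sum.mono_neutral_left[OF assms(1,2)]) (auto simp: qt_def spt_def)
  also have "\<dots> = (\<Sum>x\<in>X. \<Sum>y\<in>W. qt N q Y k a b x y)"
    by (rule sum.cong[OF refl], rule sum.mono_neutral_left[OF assms(3,4)]) (auto simp: qt_def spt_def)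
  finally show ?thesis .
qed

lemma qt_add1: "qt N q Y k (a + a') b x y = qt N q Y k a b x y + qt N q Y k a' b x y"
  unfolding qt_def plus_fun_apply distrib_right sc_distrib ..
lemma qt_add2: "qt N q Y k a (b + b') x y = qt N q Y k a b x y + qt N q Y k a b' x y"
  unfolding qt_def plus_fun_apply distrib_left distrib_right sc_distrib ..
lemma qt_sc1: "qt N q Y k (sc c a) b x y = sc c (qt N q Y k a b x y)"
  unfolding qt_def sc_apply sc_sc by (simp add: mult_ac)
lemma qt_sc2: "qt N q Y k a (sc c b) x y = sc c (qt N q Y k a b x y)"
  unfolding qt_def sc_apply sc_sc by (simp add: mult_ac)

lemma spt_add: "spt (a + b) \<subseteq> spt a \<union> spt b" by (auto simp: spt_def)
lemma spt_sc: "spt (sc c a) \<subseteq> spt a" by (auto simp: spt_def sc_apply)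

lemma has_Apart_bas: assumes "valid N z" shows "has_Apart N (Apart_b z) (bas z)"
proof -
  have "bas z \<in> VL N" by (rule VL_bas[OF assms])
  moreover have "\<forall>b. bas z b \<noteq> 0 \<longrightarrow> Apart_b b = Apart_b z" by (simp add: bas_apply)
  ultimately show ?thesis unfolding has_Apart_def by blast
qed

context
  fixes N Y
  assumes L: "lattice_vsa N Y"
begin

lemma V: "vsa (VL N) Y vac" by (rule lat_vsa[OF L])
lemma B: "bil N Y" by (rule vsa_bil[OF V])

lemma qprod_VL: assumes "a \<in> VL N" "b \<in> VL N" shows "qprod N q Y k a b \<in> VL N"
  unfolding qprod_spt qt_def using assms
  by (intro VL_sum VL_sc bil_VL[OF B] VL_bas_spt) auto

lemma qprod_bil: "bil N (qprod N q Y)"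
  unfolding bil_def
proof (intro conjI allI ballI)
  fix k a b assume "a \<in> VL N" "b \<in> VL N"
  thus "qprod N q Y k a b \<in> VL N" by (rule qprod_VL)
next
  fix k a a' b c assume V: "a \<in> VL N" "a' \<in> VL N" "b \<in> VL N"
  have fa: "finite (spt a)" "finite (spt a')" "finite (spt b)" using V VL_finite by auto
  show "qprod N q Y k (a + a') b = qprod N q Y k a b + qprod N q Y k a' b"
  proof -
    have "qprod N q Y k (a + a') b = (\<Sum>x\<in>spt a \<union> spt a'. \<Sum>y\<in>spt b. qt N q Y k (a + a') b x y)"
      by (rule qprod_super) (use fa spt_add in auto)
    also have "\<dots> = (\<Sum>x\<in>spt a \<union> spt a'. \<Sum>y\<in>spt b. qt N q Y k a b x y) + (\<Sum>x\<in>spt a \<union> spt a'. \<Sum>y\<in>spt b. qt N q Y k a' b x y)"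
      unfolding qt_add1 sum.distrib ..
    also have "\<dots> = qprod N q Y k a b + qprod N q Y k a' b"
      by (subst (1 2) qprod_super[where X="spt a \<union> spt a'" and W="spt b"]) (use fa in auto)
    finally show ?thesis .
  qed
  show "qprod N q Y k b (a + a') = qprod N q Y k b a + qprod N q Y k b a'"
  proof -
    have "qprod N q Y k b (a + a') = (\<Sum>y\<in>spt b. \<Sum>x\<in>spt a \<union> spt a'. qt N q Y k b (a + a') y x)"
      by (rule qprod_super) (use fa spt_add in auto)
    also have "\<dots> = (\<Sum>y\<in>spt b. \<Sum>x\<in>spt a \<union> spt a'. qt N q Y k b a y x) + (\<Sum>y\<in>spt b. \<Sum>x\<in>spt a \<union> spt a'. qt N q Y k b a' y x)"
      unfolding qt_add2 sum.distrib ..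
    also have "\<dots> = qprod N q Y k b a + qprod N q Y k b a'"
      by (subst (1 2) qprod_super[where W="spt a \<union> spt a'" and X="spt b"]) (use fa in auto)
    finally show ?thesis .
  qed
  show "qprod N q Y k (sc c a) b = sc c (qprod N q Y k a b)"
  proof -
    have "qprod N q Y k (sc c a) b = (\<Sum>x\<in>spt a. \<Sum>y\<in>spt b. qt N q Y k (sc c a) b x y)"
      by (rule qprod_super) (use fa spt_sc in auto)
    also have "\<dots> = sc c (qprod N q Y k a b)" unfolding qt_sc1 qprod_spt sc_sum ..
    finally show ?thesis .
  qed
  show "qprod N q Y k b (sc c a) = sc c (qprod N q Y k b a)"
  proof -
    have "qprod N q Y k b (sc c a) = (\<Sum>y\<in>spt b. \<Sum>x\<in>spt a. qt N q Y k b (sc c a) y x)"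
      by (rule qprod_super) (use fa spt_sc in auto)
    also have "\<dots> = sc c (qprod N q Y k b a)" unfolding qt_sc2 qprod_spt sc_sum ..
    finally show ?thesis .
  qed
qed

lemma qprod_trunc: assumes "a \<in> VL N" "b \<in> VL N" shows "\<exists>M. \<forall>k\<ge>M. qprod N q Y k a b = 0"
proof -
  have "\<exists>M. \<forall>t\<in>spt a \<times> spt b. \<forall>k\<ge>M. Y k (bas (fst t)) (bas (snd t)) = 0"
  proof (rule finite_bound, use assms VL_finite in blast, rule ballI)
    fix t assume "t \<in> spt a \<times> spt b"
    hence "fst t \<in> spt a" "snd t \<in> spt b" by (auto simp only: mem_Times_iff)
    thus "\<exists>M. \<forall>k\<ge>M. Y k (bas (fst t)) (bas (snd t)) = 0"
      by (intro vsa_trunc[OF V] VL_bas_spt[OF assms(1)] VL_bas_spt[OF assms(2)])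
  qed
  then obtain M where M: "\<And>x y k. x \<in> spt a \<Longrightarrow> y \<in> spt b \<Longrightarrow> k \<ge> M \<Longrightarrow> Y k (bas x) (bas y) = 0" by fastforce
  show ?thesis
    by (rule exI[of _ M]) (auto simp: qprod_spt qt_def M intro!: sum.neutral)
qed

lemma qprod_Apart: assumes "has_Apart N \<alpha> v" "has_Apart N \<alpha>' w"
  shows "qprod N q Y k v w = sc (q ^ dft N \<alpha> \<alpha>') (Y k v w)"
proof -
  have v: "v \<in> VL N" and w: "w \<in> VL N" using assms unfolding has_Apart_def by auto
  have av: "\<And>x. x \<in> spt v \<Longrightarrow> Apart_b x = \<alpha>" and aw: "\<And>x. x \<in> spt w \<Longrightarrow> Apart_b x = \<alpha>'"
    using assms unfolding has_Apart_def spt_def by auto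
  have "qprod N q Y k v w = (\<Sum>x\<in>spt v. \<Sum>y\<in>spt w. sc (q ^ dft N \<alpha> \<alpha>') (sc (v x * w y) (Y k (bas x) (bas y))))"
    unfolding qprod_spt qt_def qexp_dft by (intro sum.cong refl) (simp add: av aw mult_ac)
  also have "\<dots> = sc (q ^ dft N \<alpha> \<alpha>') (Y k v w)"
    unfolding expand2[OF B v w] sc_sum ..
  finally show ?thesis .
qed

lemma qprod_bas: "qprod N q Y k (bas x) (bas y) = sc (q ^ qexp N x y) (Y k (bas x) (bas y))"
  unfolding qprod_spt spt_bas qt_def by (simp add: bas_apply)

definition v0 :: basis where "v0 = ({#}, {}, lzero)"
lemma vac_v0: "vac = bas v0" unfolding vac_def evec_def v0_def ..
lemma Apart_v0: "Apart_b v0 = 0" unfolding v0_def Apart_b_def lzero_def by (simp add: zero_fun_def)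
lemma ht0: "ht N 0 = 0" using ht_zero[of N] by (simp add: zero_fun_def)
lemma qexp_v0: "qexp N v0 y = 0" "qexp N y v0 = 0"
  unfolding qexp_def Apart_v0 ht0 by simp_all

lemma vacV: "vac \<in> VL N" by (rule vsa_one(1)[OF V])

lemma qprod_vac1: assumes "a \<in> VL N" shows "qprod N q Y k vac a = Y k vac a"
proof -
  have "qprod N q Y k vac a = (\<Sum>y\<in>spt a. sc (a y) (Y k vac (bas y)))"
    unfolding qprod_spt vac_v0 spt_bas qt_def by (simp add: qexp_v0 bas_apply)
  also have "\<dots> = Y k vac a" by (rule lin_expand[OF bil_lin2[OF B vacV] assms, symmetric])
  finally show ?thesis .
qed

lemma qprod_vac2: assumes "a \<in> VL N" shows "qprod N q Y k a vac = Y k a vac"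
proof -
  have "qprod N q Y k a vac = (\<Sum>x\<in>spt a. sc (a x) (Y k (bas x) vac))"
    unfolding qprod_spt vac_v0 spt_bas qt_def by (simp add: qexp_v0 bas_apply)
  also have "\<dots> = Y k a vac" by (rule lin_expand[OF bil_lin1[OF B vacV] assms, symmetric])
  finally show ?thesis .
qed

lemma qprod_hom: assumes "a \<in> VL N" "b \<in> VL N" "hom a p" "hom b p'"
  shows "hom (qprod N q Y k a b) (p \<noteq> p')"
  unfolding qprod_spt qt_def
  by (intro hom_sum hom_sc vsa_hom[OF V] VL_bas_spt[OF assms(1)] VL_bas_spt[OF assms(2)]
        hom_bas[OF assms(3)] hom_bas[OF assms(4)])

lemma dft_add: "dft N a b + dft N (a + b) c = ht N a + ht N b + ht N c - ht N (a + b + c)"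
  using ht_sub[of N a b] ht_sub[of N "a + b" c] unfolding dft_def by simp

lemma qprod_borch_bas:
  assumes x: "valid N x" and y: "valid N y" and z: "valid N z"
    and that: "hom (bas x) p" "hom (bas y) p'"
  shows "fsum (LT (qprod N q Y) (bas x) (bas y) (bas z) m n k) = fsum (RT (qprod N q Y) (bas x) (bas y) (bas z) p p' m n k)"
proof -
  let ?Z = "qprod N q Y"
  define ax ay az where "ax = Apart_b x" "ay = Apart_b y" "az = Apart_b z"
  define E where "E = ht N ax + ht N ay + ht N az - ht N (ax + ay + az)"
  have bx: "bas x \<in> VL N" and bY: "bas y \<in> VL N" and bz: "bas z \<in> VL N" using VL_bas x y z by auto
  have Hx: "has_Apart N ax (bas x)" "has_Apart N ay (bas y)" "has_Apart N az (bas z)"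
    unfolding ax_ay_az_def using has_Apart_bas x y z by auto
  have ZB: "bil N ?Z" by (rule qprod_bil)
  have comp1: "\<And>i1 i2. ?Z i1 (?Z i2 (bas x) (bas y)) (bas z) = sc (q ^ E) (Y i1 (Y i2 (bas x) (bas y)) (bas z))"
  proof -
    fix i1 i2
    have W: "has_Apart N (ax + ay) (Y i2 (bas x) (bas y))" unfolding ax_ay_az_def by (rule Apart_Y[OF L x y])
    hence WV: "Y i2 (bas x) (bas y) \<in> VL N" unfolding has_Apart_def by simp
    have "?Z i1 (?Z i2 (bas x) (bas y)) (bas z) = ?Z i1 (sc (q ^ dft N ax ay) (Y i2 (bas x) (bas y))) (bas z)"
      unfolding qprod_bas qexp_dft ax_ay_az_def ..
    also have "\<dots> = sc (q ^ dft N ax ay) (sc (q ^ dft N (ax + ay) az) (Y i1 (Y i2 (bas x) (bas y)) (bas z)))"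
      unfolding bil_sc1[OF ZB WV bz] qprod_Apart[OF W Hx(3)] ..
    also have "\<dots> = sc (q ^ E) (Y i1 (Y i2 (bas x) (bas y)) (bas z))"
      unfolding sc_sc power_add[symmetric] dft_add E_def ..
    finally show "?Z i1 (?Z i2 (bas x) (bas y)) (bas z) = sc (q ^ E) (Y i1 (Y i2 (bas x) (bas y)) (bas z))" .
  qed
  have e2: "dft N ay az + dft N ax (ay + az) = E"
    using dft_add[of ay az ax] unfolding E_def by (simp add: add_ac dft_def)
  have e3: "dft N ax az + dft N ay (ax + az) = E"
    using dft_add[of ax az ay] unfolding E_def by (simp add: add_ac dft_def)
  have comp2: "\<And>i1 i2. ?Z i1 (bas x) (?Z i2 (bas y) (bas z)) = sc (q ^ E) (Y i1 (bas x) (Y i2 (bas y) (bas z)))"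
  proof -
    fix i1 i2
    have W: "has_Apart N (ay + az) (Y i2 (bas y) (bas z))" unfolding ax_ay_az_def by (rule Apart_Y[OF L y z])
    hence WV: "Y i2 (bas y) (bas z) \<in> VL N" unfolding has_Apart_def by simp
    have "?Z i1 (bas x) (?Z i2 (bas y) (bas z)) = ?Z i1 (bas x) (sc (q ^ dft N ay az) (Y i2 (bas y) (bas z)))"
      unfolding qprod_bas qexp_dft ax_ay_az_def ..
    also have "\<dots> = sc (q ^ dft N ay az) (sc (q ^ dft N ax (ay + az)) (Y i1 (bas x) (Y i2 (bas y) (bas z))))"
      unfolding bil_sc2[OF ZB bx WV] qprod_Apart[OF Hx(1) W] ..
    also have "\<dots> = sc (q ^ E) (Y i1 (bas x) (Y i2 (bas y) (bas z)))"
      unfolding sc_sc power_add[symmetric] e2 ..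
    finally show "?Z i1 (bas x) (?Z i2 (bas y) (bas z)) = sc (q ^ E) (Y i1 (bas x) (Y i2 (bas y) (bas z)))" .
  qed
  have comp3: "\<And>i1 i2. ?Z i1 (bas y) (?Z i2 (bas x) (bas z)) = sc (q ^ E) (Y i1 (bas y) (Y i2 (bas x) (bas z)))"
  proof -
    fix i1 i2
    have W: "has_Apart N (ax + az) (Y i2 (bas x) (bas z))" unfolding ax_ay_az_def by (rule Apart_Y[OF L x z])
    hence WV: "Y i2 (bas x) (bas z) \<in> VL N" unfolding has_Apart_def by simp
    have "?Z i1 (bas y) (?Z i2 (bas x) (bas z)) = ?Z i1 (bas y) (sc (q ^ dft N ax az) (Y i2 (bas x) (bas z)))"
      unfolding qprod_bas qexp_dft ax_ay_az_def ..
    also have "\<dots> = sc (q ^ dft N ax az) (sc (q ^ dft N ay (ax + az)) (Y i1 (bas y) (Y i2 (bas x) (bas z))))"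
      unfolding bil_sc2[OF ZB bY WV] qprod_Apart[OF Hx(2) W] ..
    also have "\<dots> = sc (q ^ E) (Y i1 (bas y) (Y i2 (bas x) (bas z)))"
      unfolding sc_sc power_add[symmetric] e3 ..
    finally show "?Z i1 (bas y) (?Z i2 (bas x) (bas z)) = sc (q ^ E) (Y i1 (bas y) (Y i2 (bas x) (bas z)))" .
  qed
  have l: "LT ?Z (bas x) (bas y) (bas z) m n k = (\<lambda>j. sc (q ^ E) (LT Y (bas x) (bas y) (bas z) m n k j))"
    unfolding LT_def comp1 by (simp add: mult.commute)
  have r: "RT ?Z (bas x) (bas y) (bas z) p p' m n k = (\<lambda>j. sc (q ^ E) (RT Y (bas x) (bas y) (bas z) p p' m n k j))"
    unfolding RT_def comp2 comp3 by (simp add: mult.commute sc_diff)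
  have "fsum (LT Y (bas x) (bas y) (bas z) m n k) = fsum (RT Y (bas x) (bas y) (bas z) p p' m n k)"
    by (rule vsa_borch[OF V bx bY bz that])
  thus ?thesis unfolding l r fsum_sc by simp
qed

lemma qprod_vsa: "vsa (VL N) (qprod N q Y) vac"
  unfolding vsa_iff
proof (intro conjI allI ballI impI)
  show "vac \<in> VL N" by (rule vacV)
  show "hom vac False" by (rule vsa_one(2)[OF V])
  show "\<And>k a b. a \<in> VL N \<Longrightarrow> b \<in> VL N \<Longrightarrow> qprod N q Y k a b \<in> VL N" by (rule qprod_VL)
  have ZB: "bil N (qprod N q Y)" by (rule qprod_bil)
  fix k a a' b c assume "a \<in> VL N" "a' \<in> VL N" "b \<in> VL N"
  thus "qprod N q Y k (a + a') b = qprod N q Y k a b + qprod N q Y k a' b"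
    "qprod N q Y k (sc c a) b = sc c (qprod N q Y k a b)"
    "qprod N q Y k b (a + a') = qprod N q Y k b a + qprod N q Y k b a'"
    "qprod N q Y k b (sc c a) = sc c (qprod N q Y k b a)"
    using ZB unfolding bil_def by blast+
next
  fix a b assume "a \<in> VL N" "b \<in> VL N"
  thus "\<exists>M. \<forall>k\<ge>M. qprod N q Y k a b = 0" by (rule qprod_trunc)
next
  fix a assume a: "a \<in> VL N"
  show "qprod N q Y (-1) vac a = a" unfolding qprod_vac1[OF a] by (rule vsa_vac1(1)[OF V a])
  show "qprod N q Y (-1) a vac = a" unfolding qprod_vac2[OF a] by (rule vsa_vac2(1)[OF V a])
  fix k
  show "k \<noteq> -1 \<Longrightarrow> qprod N q Y k vac a = 0" unfolding qprod_vac1[OF a] by (rule vsa_vac1(2)[OF V a])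
  show "k \<ge> 0 \<Longrightarrow> qprod N q Y k a vac = 0" unfolding qprod_vac2[OF a] by (rule vsa_vac2(2)[OF V a])
next
  fix k a b p p' assume "a \<in> VL N" "b \<in> VL N" "hom a p" "hom b p'"
  thus "hom (qprod N q Y k a b) (p \<noteq> p')" by (rule qprod_hom)
next
  fix a b c p p' m n k assume abc: "a \<in> VL N" "b \<in> VL N" "c \<in> VL N" and h: "hom a p" "hom b p'"
  show "fsum (LT (qprod N q Y) a b c m n k) = fsum (RT (qprod N q Y) a b c p p' m n k)"
    by (rule borch_reduce[OF qprod_bil _ _ abc h])
       (use qprod_trunc qprod_borch_bas in blast)+
qed

end



lemma tq_apply: assumes "finite (spt v)" shows "tq N q v = (\<lambda>x. q ^ ht N (Apart_b x) * v x)"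
proof
  fix z
  have "tq N q v z = (\<Sum>b\<in>spt v. if b = z then q ^ ht N (Apart_b z) * v z else 0)"
    unfolding tq_def lin_apply[OF assms] by (intro sum.cong refl) (auto simp: sc_apply bas_apply)
  also have "\<dots> = q ^ ht N (Apart_b z) * v z" using assms by (simp add: sum.delta' spt_def)
  finally show "tq N q v z = q ^ ht N (Apart_b z) * v z" .
qed

context
  fixes N Y and q :: complex
  assumes L: "lattice_vsa N Y" and q: "q \<noteq> 0"
begin

lemma spt_tq: assumes "finite (spt v)" shows "spt (tq N q v) = spt v"
  unfolding tq_apply[OF assms] spt_def using q by simp

lemma tq_VL: assumes "v \<in> VL N" shows "tq N q v \<in> VL N"
  using assms VL_finite[OF assms] VL_valid[OF assms] spt_tq by (intro VL_I) auto

lemma lin_on_tq: "lin_on N (tq N q)"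
  unfolding lin_on_def
proof (intro ballI allI conjI)
  fix a b c assume a: "a \<in> VL N" and b: "b \<in> VL N"
  show "tq N q (a + b) = tq N q a + tq N q b"
    unfolding tq_apply[OF VL_finite[OF VL_add[OF a b]]] tq_apply[OF VL_finite[OF a]] tq_apply[OF VL_finite[OF b]]
    by (simp add: fun_eq_iff algebra_simps)
  show "tq N q (sc c a) = sc c (tq N q a)"
    unfolding tq_apply[OF VL_finite[OF VL_sc[OF a]]] tq_apply[OF VL_finite[OF a]]
    by (simp add: fun_eq_iff sc_apply algebra_simps)
qed

lemma tq_bij: "bij_betw (tq N q) (VL N) (VL N)"
  unfolding bij_betw_def
proof
  show "inj_on (tq N q) (VL N)"
  proof
    fix a b assume a: "a \<in> VL N" and b: "b \<in> VL N" and e: "tq N q a = tq N q b"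
    show "a = b"
    proof
      fix x
      have "q ^ ht N (Apart_b x) * a x = q ^ ht N (Apart_b x) * b x"
        using fun_cong[OF e, of x] unfolding tq_apply[OF VL_finite[OF a]] tq_apply[OF VL_finite[OF b]] .
      thus "a x = b x" using q by simp
    qed
  qed
  show "tq N q ` VL N = VL N"
  proof
    show "tq N q ` VL N \<subseteq> VL N" using tq_VL by blast
    show "VL N \<subseteq> tq N q ` VL N"
    proof
      fix w assume w: "w \<in> VL N"
      define a where "a = (\<lambda>x. w x / q ^ ht N (Apart_b x))"
      have sa: "spt a = spt w" unfolding a_def spt_def using q by simp
      have aV: "a \<in> VL N" using VL_finite[OF w] VL_valid[OF w] sa by (intro VL_I) auto
      have "tq N q a = (\<lambda>x. q ^ ht N (Apart_b x) * a x)" by (rule tq_apply[OF VL_finite[OF aV]])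
      also have "\<dots> = w" unfolding a_def using q by simp
      finally have "tq N q a = w" .
      thus "w \<in> tq N q ` VL N" using aV by blast
    qed
  qed
qed

lemma tq_hom: assumes "a \<in> VL N" "hom a p" shows "hom (tq N q a) p"
  unfolding hom_def
proof (intro allI impI)
  fix x assume "tq N q a x \<noteq> 0"
  hence "a x \<noteq> 0" unfolding tq_apply[OF VL_finite[OF assms(1)]] by simp
  thus "odd (card (fst (snd x))) = p" using assms(2) unfolding hom_def by blast
qed

lemma tq_vac: "tq N q vac = vac"
  unfolding tq_apply[OF VL_finite[OF vacV[OF L]]] unfolding vac_v0[OF L]
  by (auto simp: fun_eq_iff bas_apply Apart_v0[OF L] ht0[OF L])

lemma tq_Apart: assumes "has_Apart N \<alpha> W" shows "tq N q W = sc (q ^ ht N \<alpha>) W"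
proof -
  have WV: "W \<in> VL N" and A: "\<And>z. W z \<noteq> 0 \<Longrightarrow> Apart_b z = \<alpha>" using assms unfolding has_Apart_def by auto
  show ?thesis unfolding tq_apply[OF VL_finite[OF WV]]
  proof
    fix z show "q ^ ht N (Apart_b z) * W z = sc (q ^ ht N \<alpha>) W z"
      using A[of z] by (cases "W z = 0") (auto simp: sc_apply)
  qed
qed

lemma tq_hommor: assumes a: "a \<in> VL N" and b: "b \<in> VL N"
  shows "tq N q (qprod N q Y k a b) = Y k (tq N q a) (tq N q b)"
proof -
  have U: "\<And>x y. x \<in> spt a \<Longrightarrow> y \<in> spt b \<Longrightarrow> Y k (bas x) (bas y) \<in> VL N"
    using a b by (intro bil_VL[OF B[OF L]] VL_bas_spt) auto
  have "tq N q (qprod N q Y k a b) = (\<Sum>x\<in>spt a. \<Sum>y\<in>spt b. sc (a x * b y * q ^ qexp N x y) (tq N q (Y k (bas x) (bas y))))"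
    unfolding qprod_spt qt_def by (rule lin_on_sum2[OF lin_on_tq U])
  also have "\<dots> = (\<Sum>x\<in>spt a. \<Sum>y\<in>spt b. sc (tq N q a x * tq N q b y) (Y k (bas x) (bas y)))"
  proof (intro sum.cong refl)
    fix x y assume x: "x \<in> spt a" and y: "y \<in> spt b"
    have vx: "valid N x" and vy: "valid N y" using VL_valid a b x y by auto
    have e: "qexp N x y + ht N (Apart_b x + Apart_b y) = ht N (Apart_b x) + ht N (Apart_b y)"
      unfolding qexp_def using ht_sub[of N "Apart_b x" "Apart_b y"] by simp
    have p: "q ^ qexp N x y * q ^ ht N (Apart_b x + Apart_b y) = q ^ ht N (Apart_b x) * q ^ ht N (Apart_b y)"
      unfolding power_add[symmetric] e ..
    have "sc (a x * b y * q ^ qexp N x y) (tq N q (Y k (bas x) (bas y)))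
        = sc (a x * b y * q ^ qexp N x y * q ^ ht N (Apart_b x + Apart_b y)) (Y k (bas x) (bas y))"
      unfolding tq_Apart[OF Apart_Y[OF L vx vy]] sc_sc ..
    also have "a x * b y * q ^ qexp N x y * q ^ ht N (Apart_b x + Apart_b y) = tq N q a x * tq N q b y"
      unfolding tq_apply[OF VL_finite[OF a]] tq_apply[OF VL_finite[OF b]] mult.assoc p
      by (simp only: mult_ac)
    finally show "sc (a x * b y * q ^ qexp N x y) (tq N q (Y k (bas x) (bas y)))
        = sc (tq N q a x * tq N q b y) (Y k (bas x) (bas y))" .
  qed
  also have "\<dots> = Y k (tq N q a) (tq N q b)"
    using expand2[OF B[OF L] tq_VL[OF a] tq_VL[OF b], of k] unfolding spt_tq[OF VL_finite[OF a]] spt_tq[OF VL_finite[OF b]]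
    by (rule sym)
  finally show ?thesis .
qed

lemma tq_iso: "vsa_iso (VL N) (qprod N q Y) vac Y vac (tq N q)"
  unfolding vsa_iso_def
proof (intro conjI ballI allI impI)
  show "bij_betw (tq N q) (VL N) (VL N)" by (rule tq_bij)
  show "tq N q vac = vac" by (rule tq_vac)
  fix a b c assume "a \<in> VL N" "b \<in> VL N"
  thus "tq N q (a + b) = tq N q a + tq N q b" "tq N q (sc c a) = sc c (tq N q a)"
    using lin_on_tq unfolding lin_on_def by blast+
next
  fix a p assume "a \<in> VL N" "hom a p" thus "hom (tq N q a) p" by (rule tq_hom)
next
  fix k a b assume "a \<in> VL N" "b \<in> VL N"
  thus "tq N q (qprod N q Y k a b) = Y k (tq N q a) (tq N q b)" by (rule tq_hommor)
qed

end

lemma part3: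
  assumes L: "lattice_vsa N Y" and h: "has_Apart N \<alpha> v" "has_Apart N \<alpha>' w"
  shows "qprod N 0 Y k v w = (if \<exists>j\<in>{1..Suc N}. inDelta N j \<alpha> \<and> inDelta N j \<alpha>' then Y k v w else 0)"
proof -
  have e: "qprod N 0 Y k v w = sc (0 ^ dft N \<alpha> \<alpha>') (Y k v w)" by (rule qprod_Apart[OF L h])
  show ?thesis
  proof (cases "\<exists>j\<in>{1..Suc N}. inDelta N j \<alpha> \<and> inDelta N j \<alpha>'")
    case True
    hence "dft N \<alpha> \<alpha>' = 0" unfolding dft_def using defect_zero_iff by blast
    thus ?thesis using True e by simp
  next
    case False
    hence "dft N \<alpha> \<alpha>' \<noteq> 0" unfolding dft_def using defect_zero_iff by blast
    thus ?thesis using e by (subst if_not_P[OF False]) (simp add: power_0_left)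
  qed
qed

theorem mainTheorem1:
  fixes N :: nat and Y :: "int \<Rightarrow> vec \<Rightarrow> vec \<Rightarrow> vec"
  assumes "1 \<le> N" and "lattice_vsa N Y"
  shows "(\<forall>q::complex. vsa (VL N) (qprod N q Y) vac)
       \<and> (\<forall>q::complex. q \<noteq> 0 \<longrightarrow> vsa_iso (VL N) (qprod N q Y) vac Y vac (tq N q))
       \<and> (\<forall>k \<alpha> \<alpha>' v w. has_Apart N \<alpha> v \<longrightarrow> has_Apart N \<alpha>' w \<longrightarrow>
            qprod N 0 Y k v w =
              (if \<exists>j\<in>{1..Suc N}. inDelta N j \<alpha> \<and> inDelta N j \<alpha>' then Y k v w else 0))"
  using qprod_vsa[OF assms(2)] tq_iso[OF assms(2)] part3[OF assms(2)] by blast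

end
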